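(* Let $X\subseteq Y\subseteq Z$ be FK-spaces containing $\phi$. (i) If $Y$ is deferred Ces\`{a}ro conull with respect to $X$, then $Z$ is deferred Ces\`{a}ro conull with respect to $X$. (ii) If $Z$ is deferred Ces\`{a}ro conull with respect to $X$ and $Y$ is closed in $Z$, then $Y$ is deferred Ces\`{a}ro conull with respect to $X$.
   Context: An FK-space is a vector subspace of the space $w$ of all complex sequences with a complete metrizable locally convex topology in which all coordinate functionals are continuous; $X'$ is the continuous dual. $\delta^j$ is the sequence with $1$ in position $j$, $0$ elsewhere; $\phi=\operatorname{span}\{\delta^j\}$. Fix nonnegative integer sequences $p(n)<q(n)$ with $q(n)\to\infty$. For $x\in w$ let $x^{(k)}=\sum_{j=1}^k x_j\delta^j$ and $T_n(x)=\frac{1}{q(n)-p(n)}\sum_{k=p(n)+1}^{q(n)}x^{(k)}$. For an FK-space $X\supseteq\phi$: $D_p^qW(X)=\{x\in X : f(T_n(x))\to f(x) \text{ for all } f\in X'\}$; $D_p^qB(X)=\{x\in X : \sup_n|f(T_n(x))|<\infty \text{ for all } f\in X'\}$. For FK-spaces $X\subseteq Y$ with $D_p^qW(X)\neq D_p^qB(X)$, $Y$ is called deferred Ces\`{a}ro conull with respect to $X$ if $D_p^qB(X)\subseteq D_p^qW(Y)$. *)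

theory Defs
  imports "HOL-Analysis.Analysis"
begin

type_synonym cseq = "nat \<Rightarrow> complex"

text \<open>Sequences are indexed from 0; position j of the paper is index j-1 here.\<close>

definition delta :: "nat \<Rightarrow> cseq" where
  "delta j = (\<lambda>i. if i = j then 1 else 0)"

text \<open>phi = span of the unit sequences = finitely supported sequences.\<close>
definition phi :: "cseq set" where
  "phi = {x. finite {j. x j \<noteq> 0}}"

definition sadd :: "cseq \<Rightarrow> cseq \<Rightarrow> cseq" where
  "sadd x y = (\<lambda>j. x j + y j)"

definition szero :: cseq where
  "szero = (\<lambda>j. 0)"

definition smul :: "complex \<Rightarrow> cseq \<Rightarrow> cseq" where
  "smul c x = (\<lambda>j. c * x j)"

definition locally_convex_at0 :: "cseq topology \<Rightarrow> bool" where
  "locally_convex_at0 T \<longleftrightarrow>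
     (\<forall>U. openin T U \<and> szero \<in> U \<longrightarrow>
        (\<exists>V. openin T V \<and> szero \<in> V \<and> V \<subseteq> U \<and>
             (\<forall>x\<in>V. \<forall>y\<in>V. \<forall>t::real. 0 \<le> t \<and> t \<le> 1 \<longrightarrow>
                 (\<lambda>j. of_real t * x j + of_real (1 - t) * y j) \<in> V)))"

definition FK_space :: "cseq set \<Rightarrow> cseq topology \<Rightarrow> bool" where
  "FK_space X T \<longleftrightarrow>
     szero \<in> X \<and> (\<forall>x\<in>X. \<forall>y\<in>X. sadd x y \<in> X) \<and> (\<forall>c. \<forall>x\<in>X. smul c x \<in> X) \<and>
     topspace T = X \<and>
     continuous_map (prod_topology T T) T (\<lambda>(x, y). sadd x y) \<and>
     continuous_map (prod_topology (euclidean :: complex topology) T) T (\<lambda>(c, x). smul c x) \<and>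
     completely_metrizable_space T \<and>
     locally_convex_at0 T \<and>
     (\<forall>j. continuous_map T (euclidean :: complex topology) (\<lambda>x. x j))"

definition FK_dual :: "cseq set \<Rightarrow> cseq topology \<Rightarrow> (cseq \<Rightarrow> complex) set" where
  "FK_dual X T = {f. (\<forall>x\<in>X. \<forall>y\<in>X. f (sadd x y) = f x + f y) \<and>
                     (\<forall>c. \<forall>x\<in>X. f (smul c x) = c * f x) \<and>
                     continuous_map T euclidean f}"

definition sect :: "nat \<Rightarrow> cseq \<Rightarrow> cseq" where
  "sect k x = (\<lambda>j. if j < k then x j else 0)"

definition Tdc :: "(nat \<Rightarrow> nat) \<Rightarrow> (nat \<Rightarrow> nat) \<Rightarrow> nat \<Rightarrow> cseq \<Rightarrow> cseq" where
  "Tdc p q n x = (\<lambda>j. (1 / of_nat (q n - p n)) * (\<Sum>k\<in>{p n + 1..q n}. sect k x j))"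

definition DW :: "(nat \<Rightarrow> nat) \<Rightarrow> (nat \<Rightarrow> nat) \<Rightarrow> cseq set \<Rightarrow> cseq topology \<Rightarrow> cseq set" where
  "DW p q X T = {x \<in> X. \<forall>f \<in> FK_dual X T. (\<lambda>n. f (Tdc p q n x)) \<longlonglongrightarrow> f x}"

definition DB :: "(nat \<Rightarrow> nat) \<Rightarrow> (nat \<Rightarrow> nat) \<Rightarrow> cseq set \<Rightarrow> cseq topology \<Rightarrow> cseq set" where
  "DB p q X T = {x \<in> X. \<forall>f \<in> FK_dual X T. (\<exists>M. \<forall>n. norm (f (Tdc p q n x)) \<le> M)}"

definition dc_conull ::
  "(nat \<Rightarrow> nat) \<Rightarrow> (nat \<Rightarrow> nat) \<Rightarrow> cseq set \<Rightarrow> cseq topology \<Rightarrow> cseq set \<Rightarrow> cseq topology \<Rightarrow> bool" where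
  "dc_conull p q X TX Y TY \<longleftrightarrow>
     X \<subseteq> Y \<and> DW p q X TX \<noteq> DB p q X TX \<and> DB p q X TX \<subseteq> DW p q Y TY"

end

theory Submission
  imports Defs
begin

lemma sadd_apply: "sadd x y j = x j + y j" by (simp add: sadd_def)
lemma smul_apply: "smul c x j = c * x j" by (simp add: smul_def)
lemma szero_apply: "szero j = 0" by (simp add: szero_def)

definition ssub :: "cseq \<Rightarrow> cseq \<Rightarrow> cseq" where
  "ssub x y = sadd x (smul (-1) y)"
lemma ssub_apply: "ssub x y j = x j - y j" by (simp add: ssub_def sadd_apply smul_apply)

definition tvs :: "cseq set \<Rightarrow> cseq topology \<Rightarrow> bool" where
  "tvs S T \<longleftrightarrow>
     szero \<in> S \<and> (\<forall>x\<in>S. \<forall>y\<in>S. sadd x y \<in> S) \<and> (\<forall>c. \<forall>x\<in>S. smul c x \<in> S) \<and>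
     topspace T = S \<and>
     continuous_map (prod_topology T T) T (\<lambda>(x, y). sadd x y) \<and>
     continuous_map (prod_topology (euclidean :: complex topology) T) T (\<lambda>(c, x). smul c x) \<and>
     (\<forall>j. continuous_map T (euclidean :: complex topology) (\<lambda>x. x j))"

lemma FK_tvs: "FK_space X T \<Longrightarrow> tvs X T"
  by (simp add: FK_space_def tvs_def)

context
  fixes S T assumes tv: "tvs S T"
begin

lemma tv_zero: "szero \<in> S" using tv by (simp add: tvs_def)
lemma tv_add: "x \<in> S \<Longrightarrow> y \<in> S \<Longrightarrow> sadd x y \<in> S" using tv by (simp add: tvs_def)
lemma tv_smul: "x \<in> S \<Longrightarrow> smul c x \<in> S" using tv by (simp add: tvs_def)
lemma tv_sub: "x \<in> S \<Longrightarrow> y \<in> S \<Longrightarrow> ssub x y \<in> S" by (simp add: ssub_def tv_add tv_smul)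
lemma tv_top: "topspace T = S" using tv by (simp add: tvs_def)
lemma tv_cadd: "continuous_map (prod_topology T T) T (\<lambda>(x, y). sadd x y)" using tv by (simp add: tvs_def)
lemma tv_csmul: "continuous_map (prod_topology (euclidean :: complex topology) T) T (\<lambda>(c, x). smul c x)"
  using tv by (simp add: tvs_def)
lemma tv_coord: "continuous_map T (euclidean :: complex topology) (\<lambda>x. x j)" using tv by (simp add: tvs_def)

lemma tv_open_sub: "openin T U \<Longrightarrow> U \<subseteq> S"
  using openin_subset tv_top by blast

lemma tv_cont2:
  assumes "continuous_map X T f" "continuous_map X T g"
  shows "continuous_map X T (\<lambda>z. sadd (f z) (g z))"
proof -
  have "continuous_map X (prod_topology T T) (\<lambda>z. (f z, g z))"
    using assms by (simp add: continuous_map_pairedI)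
  from continuous_map_compose[OF this tv_cadd] show ?thesis by (simp add: o_def)
qed

lemma tv_cont_smul_fun:
  assumes "continuous_map X euclidean f" "continuous_map X T g"
  shows "continuous_map X T (\<lambda>z. smul (f z) (g z))"
proof -
  have "continuous_map X (prod_topology euclidean T) (\<lambda>z. (f z, g z))"
    using assms by (simp add: continuous_map_pairedI)
  from continuous_map_compose[OF this tv_csmul] show ?thesis by (simp add: o_def)
qed

lemma tv_cont_transl: "a \<in> S \<Longrightarrow> continuous_map T T (\<lambda>x. sadd a x)"
  by (rule tv_cont2) (auto simp: tv_top)

lemma tv_cont_scal: "continuous_map T T (\<lambda>x. smul c x)"
  by (rule tv_cont_smul_fun) auto

lemma tv_cont_cfun: "x \<in> S \<Longrightarrow> continuous_map euclidean T (\<lambda>c. smul c x)"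
  by (rule tv_cont_smul_fun) (auto simp: tv_top)

lemma tv_cont_sub2:
  assumes "continuous_map X T f" "continuous_map X T g"
  shows "continuous_map X T (\<lambda>z. ssub (f z) (g z))"
  unfolding ssub_def
  by (intro tv_cont2 assms tv_cont_smul_fun) auto

lemma tv_csub: "continuous_map (prod_topology T T) T (\<lambda>(x, y). ssub x y)"
proof -
  have "continuous_map (prod_topology T T) T (\<lambda>z. ssub (fst z) (snd z))"
    by (intro tv_cont_sub2 continuous_map_fst continuous_map_snd)
  then show ?thesis by (simp add: case_prod_unfold)
qed

lemma tv_preimage_open:
  assumes "continuous_map T T f" "openin T U"
  shows "openin T {x \<in> S. f x \<in> U}"
  using openin_continuous_map_preimage[OF assms] tv_top by simp

lemma tv_zero_nbhd2:
  assumes "continuous_map (prod_topology T T) T (\<lambda>(x, y). h x y)" "h szero szero \<in> U" "openin T U"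
  shows "\<exists>P. openin T P \<and> szero \<in> P \<and> (\<forall>a\<in>P. \<forall>b\<in>P. h a b \<in> U)"
proof -
  have o: "openin (prod_topology T T) {z \<in> topspace (prod_topology T T). (\<lambda>(x, y). h x y) z \<in> U}"
    using openin_continuous_map_preimage[OF assms(1) assms(3)] .
  have m: "(szero, szero) \<in> {z \<in> topspace (prod_topology T T). (\<lambda>(x, y). h x y) z \<in> U}"
    using assms(2) tv_zero tv_top by simp
  obtain A B where AB: "openin T A" "openin T B" "szero \<in> A" "szero \<in> B"
     "A \<times> B \<subseteq> {z \<in> topspace (prod_topology T T). (\<lambda>(x, y). h x y) z \<in> U}"
    using o[unfolded openin_prod_topology_alt, rule_format, OF m] by blast
  show ?thesis
  proof (intro exI[of _ "A \<inter> B"] conjI ballI)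
    show "openin T (A \<inter> B)" using AB by (simp add: openin_Int)
    show "szero \<in> A \<inter> B" using AB by simp
    fix a b assume "a \<in> A \<inter> B" "b \<in> A \<inter> B"
    then have "(a, b) \<in> A \<times> B" by auto
    then have "(a, b) \<in> {z \<in> topspace (prod_topology T T). (\<lambda>(x, y). h x y) z \<in> U}"
      using AB(5) by blast
    then show "h a b \<in> U" by simp
  qed
qed

lemma tv_nbhd_add:
  assumes "openin T U" "szero \<in> U"
  shows "\<exists>P. openin T P \<and> szero \<in> P \<and> (\<forall>a\<in>P. \<forall>b\<in>P. sadd a b \<in> U)"
proof -
  have "sadd szero szero = szero" by (simp add: fun_eq_iff szero_apply sadd_apply smul_apply ssub_apply)
  then show ?thesis using tv_zero_nbhd2[OF tv_cadd] assms by simp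
qed

lemma tv_nbhd_sub:
  assumes "openin T U" "szero \<in> U"
  shows "\<exists>P. openin T P \<and> szero \<in> P \<and> (\<forall>a\<in>P. \<forall>b\<in>P. ssub a b \<in> U)"
proof -
  have "ssub szero szero = szero" by (simp add: fun_eq_iff szero_apply sadd_apply smul_apply ssub_apply)
  then show ?thesis using tv_zero_nbhd2[OF tv_csub] assms by simp
qed

lemma tv_absorb:
  assumes "x \<in> S" "openin T U" "szero \<in> U"
  shows "\<exists>r>0. \<forall>c. norm c < r \<longrightarrow> smul c x \<in> U"
proof -
  have "openin euclidean {c \<in> topspace euclidean. smul c x \<in> U}"
    using openin_continuous_map_preimage[OF tv_cont_cfun[OF assms(1)] assms(2)] .
  then have o: "open {c. smul c x \<in> U}" by simp
  have "smul 0 x = szero" by (simp add: fun_eq_iff szero_apply sadd_apply smul_apply ssub_apply)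
  then have "0 \<in> {c. smul c x \<in> U}" using assms by simp
  with o obtain r where "r > 0" "ball 0 r \<subseteq> {c. smul c x \<in> U}"
    by (meson open_contains_ball)
  then show ?thesis using mem_ball_0 by blast
qed

lemma tv_zero_unique:
  assumes "x \<in> S" "\<And>U. openin T U \<Longrightarrow> szero \<in> U \<Longrightarrow> x \<in> U"
  shows "x = szero"
proof (rule ccontr)
  assume "x \<noteq> szero"
  then obtain j where j: "x j \<noteq> 0" by (auto simp: fun_eq_iff szero_apply sadd_apply smul_apply ssub_apply)
  have "openin T {z \<in> topspace T. z j \<in> - {x j}}"
    by (rule openin_continuous_map_preimage[OF tv_coord]) auto
  moreover have "szero \<in> {z \<in> topspace T. z j \<in> - {x j}}" using j tv_zero tv_top by (auto simp: szero_apply)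
  ultimately have "x \<in> {z \<in> topspace T. z j \<in> - {x j}}" using assms(2) by blast
  then show False by (simp add: szero_apply)
qed

end

lemma closure_sub:
  assumes tv: "tvs S T" and u: "u \<in> T closure_of W" and v: "v \<in> T closure_of W"
    and WV: "\<forall>a\<in>W. \<forall>b\<in>W. ssub a b \<in> V"
  shows "ssub u v \<in> T closure_of V"
proof -
  have "(u, v) \<in> prod_topology T T closure_of (W \<times> W)"
    using u v by (simp add: closure_of_Times)
  then have "(\<lambda>(x, y). ssub x y) (u, v) \<in> T closure_of ((\<lambda>(x, y). ssub x y) ` (W \<times> W))"
    using continuous_map_image_closure_subset[OF tv_csub[OF tv]] by blast
  moreover have "(\<lambda>(x, y). ssub x y) ` (W \<times> W) \<subseteq> V" using WV by auto
  ultimately show ?thesis using closure_of_mono by fastforce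
qed

lemma baire_step:
  assumes tv1: "tvs S T1" and tv2: "tvs S T2" and cm2: "completely_metrizable_space T2"
    and fin: "\<And>U. openin T2 U \<Longrightarrow> openin T1 U"
    and V: "openin T1 V" "szero \<in> V"
  shows "szero \<in> T2 interior_of (T2 closure_of V)"
proof -
  obtain W where W: "openin T1 W" "szero \<in> W" "\<forall>a\<in>W. \<forall>b\<in>W. ssub a b \<in> V"
    using tv_nbhd_sub[OF tv1 V] by blast
  have WS: "W \<subseteq> S" using tv_open_sub[OF tv1 W(1)] .
  define F where "F n = {x \<in> topspace T2. smul (1 / of_nat (Suc n)) x \<in> T2 closure_of W}" for n
  have clF: "closedin T2 (F n)" for n
    unfolding F_def
    by (rule closedin_continuous_map_preimage[OF tv_cont_scal[OF tv2]]) simp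
  have unF: "\<Union>(range F) = S"
  proof
    show "\<Union>(range F) \<subseteq> S" using tv_top[OF tv2] by (auto simp: F_def)
    show "S \<subseteq> \<Union>(range F)"
    proof
      fix x assume x: "x \<in> S"
      obtain r where r: "r > 0" "\<forall>c. norm c < r \<longrightarrow> smul c x \<in> W"
        using tv_absorb[OF tv1 x W(1,2)] by blast
      obtain n where n: "n > 0" "inverse (of_nat n) < r" using ex_inverse_of_nat_less[OF r(1)] by blast
      have "inverse (real (Suc n)) \<le> inverse (of_nat n)"
        using n(1) by (simp add: le_imp_inverse_le)
      moreover have "norm (1 / of_nat (Suc n) :: complex) = inverse (real (Suc n))"
        by (simp only: norm_divide norm_one norm_of_nat divide_inverse mult_1_left norm_inverse)
      ultimately have "norm (1 / of_nat (Suc n) :: complex) < r" using n(2) by linarith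
      then have "smul (1 / of_nat (Suc n)) x \<in> W" using r by blast
      then have "smul (1 / of_nat (Suc n)) x \<in> T2 closure_of W"
        using closure_of_subset[of W T2] WS tv_top[OF tv2] by blast
      then have "x \<in> F n" using x tv_top[OF tv2] by (simp add: F_def)
      then show "x \<in> \<Union>(range F)" by blast
    qed
  qed
  have "\<exists>n. T2 interior_of F n \<noteq> {}"
  proof (rule ccontr)
    assume "\<not> ?thesis"
    then have "T2 interior_of \<Union>(range F) = {}"
      by (intro Baire_category_alt) (use cm2 clF in auto)
    then show False using unF tv_top[OF tv2] tv_zero[OF tv2] interior_of_topspace[of T2] by auto
  qed
  then obtain n a where a: "a \<in> T2 interior_of F n" by blast
  define U0 where "U0 = T2 interior_of F n"
  have Oo: "openin T2 U0" and OF: "U0 \<subseteq> F n" and aO: "a \<in> U0"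
    using a by (auto simp: U0_def interior_of_subset)
  have aS: "a \<in> S" using OF aO tv_top[OF tv2] by (auto simp: F_def)
  define c :: complex where "c = of_nat (Suc n)"
  have c0: "c \<noteq> 0" unfolding c_def by (metis of_nat_eq_0_iff nat.simps(3))
  define N where "N = {x \<in> S. sadd a (smul c x) \<in> U0}"
  have contN: "continuous_map T2 T2 (\<lambda>x. sadd a (smul c x))"
    using continuous_map_compose[OF tv_cont_scal[OF tv2] tv_cont_transl[OF tv2 aS]]
    by (simp add: o_def)
  have No: "openin T2 N" unfolding N_def by (rule tv_preimage_open[OF tv2 contN Oo])
  have "sadd a (smul c szero) = a" by (simp add: fun_eq_iff szero_apply sadd_apply smul_apply ssub_apply)
  then have N0: "szero \<in> N" using aO tv_zero[OF tv2] by (simp add: N_def)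
  have "N \<subseteq> T2 closure_of V"
  proof
    fix x assume x: "x \<in> N"
    then have xS: "x \<in> S" by (simp add: N_def)
    have "sadd a (smul c x) \<in> F n" using x OF by (auto simp: N_def)
    then have u: "smul (1 / c) (sadd a (smul c x)) \<in> T2 closure_of W" by (simp add: F_def c_def)
    have "a \<in> F n" using aO OF by auto
    then have v: "smul (1 / c) a \<in> T2 closure_of W" by (simp add: F_def c_def)
    have "ssub (smul (1 / c) (sadd a (smul c x))) (smul (1 / c) a) = x"
      using c0 by (simp add: fun_eq_iff szero_apply sadd_apply smul_apply ssub_apply field_simps)
    then show "x \<in> T2 closure_of V" using closure_sub[OF tv2 u v W(3)] by simp
  qed
  then have "N \<subseteq> T2 interior_of (T2 closure_of V)" using No by (simp add: interior_of_maximal)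
  then show ?thesis using N0 by blast
qed

lemma klee:
  assumes tv: "tvs S T" and cm: "completely_metrizable_space T"
    and xS: "\<And>n. x n \<in> S"
    and C: "\<And>W. openin T W \<Longrightarrow> szero \<in> W \<Longrightarrow> \<exists>N. \<forall>m\<ge>N. \<forall>n\<ge>N. ssub (x m) (x n) \<in> W"
  shows "\<exists>s\<in>S. limitin T x s sequentially"
proof -
  obtain M d where md: "Metric_space M d" "Metric_space.mcomplete M d" "T = Metric_space.mtopology M d"
    using cm unfolding completely_metrizable_space_def by blast
  interpret Metric_space M d by (rule md(1))
  have MS: "M = S" using md(3) tv_top[OF tv] by simp
  define A where "A k = {z \<in> S. \<exists>N. \<forall>m\<ge>N. \<forall>n\<ge>N. d (sadd z (x m)) (sadd z (x n)) < 1 / Suc k}" for k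
  define G where "G k = T interior_of A k" for k
  have dense: "T closure_of G k = S" for k
  proof
    show "T closure_of G k \<subseteq> S" by (metis closure_of_subset_topspace tv_top[OF tv])
    show "S \<subseteq> T closure_of G k"
    proof
      fix z0 assume z0: "z0 \<in> S"
      define \<epsilon> :: real where "\<epsilon> = 1 / Suc k"
      have \<epsilon>0: "\<epsilon> > 0" by (simp add: \<epsilon>_def)
      have hx: "\<exists>y. y \<in> G k \<and> y \<in> U0" if U0: "z0 \<in> U0" "openin T U0" for U0
      proof -
        define WO where "WO = {w \<in> S. sadd z0 w \<in> U0}"
        have WOo: "openin T WO" unfolding WO_def
          by (rule tv_preimage_open[OF tv tv_cont_transl[OF tv z0] U0(2)])
        have "sadd z0 szero = z0" by (simp add: fun_eq_iff szero_apply sadd_apply smul_apply ssub_apply)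
        then have WO0: "szero \<in> WO" using U0(1) tv_zero[OF tv] by (simp add: WO_def)
        obtain N0 where N0: "\<forall>m\<ge>N0. \<forall>n\<ge>N0. ssub (x m) (x n) \<in> WO" using C[OF WOo WO0] by blast
        define q where "q = sadd z0 (x N0)"
        have qS: "q \<in> S" using tv_add[OF tv z0 xS] by (simp add: q_def)
        define B where "B = {w \<in> S. sadd q w \<in> mball q (\<epsilon>/2)}"
        have Bo: "openin T B" unfolding B_def
          by (rule tv_preimage_open[OF tv tv_cont_transl[OF tv qS]]) (simp add: md(3))
        have "sadd q szero = q" by (simp add: fun_eq_iff szero_apply sadd_apply smul_apply ssub_apply)
        moreover have "q \<in> M" using qS MS by simp
        then have "q \<in> mball q (\<epsilon>/2)" using \<epsilon>0 by simp
        ultimately have B0: "szero \<in> B" using tv_zero[OF tv] \<epsilon>0 by (simp add: B_def)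
        obtain P where P: "openin T P" "szero \<in> P" "\<forall>a\<in>P. \<forall>b\<in>P. sadd a b \<in> B"
          using tv_nbhd_add[OF tv Bo B0] by blast
        obtain N1' where N1': "\<forall>m\<ge>N1'. \<forall>n\<ge>N1'. ssub (x m) (x n) \<in> P" using C[OF P(1,2)] by blast
        define N1 where "N1 = max N0 N1'"
        define z where "z = sadd z0 (ssub (x N0) (x N1))"
        have "ssub (x N0) (x N1) \<in> WO" using N0 by (simp add: N1_def)
        then have zO: "z \<in> U0" by (simp add: WO_def z_def)
        have zS: "z \<in> S" by (simp add: z_def tv_add[OF tv z0] tv_sub[OF tv] xS)
        define Q where "Q = U0 \<inter> {z' \<in> S. ssub z' z \<in> P}"
        have cQ: "continuous_map T T (\<lambda>z'. ssub z' z)"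
          by (rule tv_cont_sub2[OF tv]) (auto simp: tv_top[OF tv] zS)
        have Qo: "openin T Q" unfolding Q_def
          by (intro openin_Int U0(2) tv_preimage_open[OF tv cQ P(1)])
        have "ssub z z = szero" by (simp add: fun_eq_iff szero_apply sadd_apply smul_apply ssub_apply)
        then have zQ: "z \<in> Q" using zO zS P(2) by (simp add: Q_def)
        have "Q \<subseteq> A k"
        proof
          fix z' assume z': "z' \<in> Q"
          then have z'S: "z' \<in> S" and z'P: "ssub z' z \<in> P" by (auto simp: Q_def)
          have near: "d q (sadd z' (x m)) < \<epsilon>/2" if m: "m \<ge> N1" for m
          proof -
            have "ssub (x m) (x N1) \<in> P" using N1' m by (simp add: N1_def)
            then have "sadd (ssub z' z) (ssub (x m) (x N1)) \<in> B" using P(3) z'P by blast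
            moreover have "sadd q (sadd (ssub z' z) (ssub (x m) (x N1))) = sadd z' (x m)"
              by (simp add: fun_eq_iff szero_apply sadd_apply smul_apply ssub_apply q_def z_def)
            ultimately show ?thesis by (simp add: B_def)
          qed
          have "\<forall>m\<ge>N1. \<forall>n\<ge>N1. d (sadd z' (x m)) (sadd z' (x n)) < 1 / Suc k"
          proof (intro allI impI)
            fix m n assume "m \<ge> N1" "n \<ge> N1"
            have inM: "sadd z' (x m) \<in> M" "sadd z' (x n) \<in> M" "q \<in> M"
              using MS tv_add[OF tv z'S xS] qS by auto
            have "d (sadd z' (x m)) (sadd z' (x n)) \<le> d (sadd z' (x m)) q + d q (sadd z' (x n))"
              using triangle inM by blast
            also have "\<dots> < \<epsilon>" using near[OF \<open>m \<ge> N1\<close>] near[OF \<open>n \<ge> N1\<close>] commute inM by simp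
            finally show "d (sadd z' (x m)) (sadd z' (x n)) < 1 / Suc k" by (simp add: \<epsilon>_def)
          qed
          then show "z' \<in> A k" using z'S by (auto simp: A_def)
        qed
        then have "Q \<subseteq> G k" using Qo by (simp add: G_def interior_of_maximal)
        then show ?thesis using zQ zO by blast
      qed
      show "z0 \<in> T closure_of G k"
        unfolding in_closure_of using z0 tv_top[OF tv] hx by blast
    qed
  qed
  have "T closure_of \<Inter>(range G) = topspace T"
  proof (rule Baire_category)
    show "completely_metrizable_space T \<or> locally_compact_space T \<and> regular_space T" using cm by blast
    show "countable (range G)" by simp
    fix U assume "U \<in> range G"
    then obtain k where "U = G k" by blast
    then show "openin T U \<and> T closure_of U = topspace T"
      using dense[of k] tv_top[OF tv] by (simp add: G_def)
  qed
  then have "\<Inter>(range G) \<noteq> {}" using tv_zero[OF tv] tv_top[OF tv] by auto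
  then obtain z where z: "\<And>k. z \<in> G k" by blast
  have zA: "z \<in> A k" for k using z[of k] interior_of_subset[of T "A k"] unfolding G_def by blast
  have zS: "z \<in> S" using zA[of 0] by (simp add: A_def)
  have "MCauchy (\<lambda>n. sadd z (x n))"
    unfolding MCauchy_def
  proof (intro conjI allI impI)
    show "range (\<lambda>n. sadd z (x n)) \<subseteq> M" using MS tv_add[OF tv zS xS] by auto
    fix e :: real assume "e > 0"
    then obtain k where k: "k > 0" "inverse (of_nat k) < e" using ex_inverse_of_nat_less by blast
    have "1 / real (Suc k) \<le> inverse (of_nat k)" using k(1) by (simp add: divide_inverse le_imp_inverse_le)
    then have lt: "1 / real (Suc k) < e" using k(2) by linarith
    obtain N where N: "\<forall>m\<ge>N. \<forall>n\<ge>N. d (sadd z (x m)) (sadd z (x n)) < 1 / Suc k"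
      using zA[of k] by (auto simp: A_def)
    show "\<exists>N. \<forall>n n'. N \<le> n \<longrightarrow> N \<le> n' \<longrightarrow> d (sadd z (x n)) (sadd z (x n')) < e"
      using N lt by (meson less_trans)
  qed
  then obtain w where w: "limitin mtopology (\<lambda>n. sadd z (x n)) w sequentially"
    using md(2) unfolding mcomplete_def by blast
  have mz: "smul (-1) z \<in> S" using tv_smul[OF tv zS] .
  have "limitin T ((\<lambda>v. sadd (smul (-1) z) v) \<circ> (\<lambda>n. sadd z (x n))) (sadd (smul (-1) z) w) sequentially"
    using continuous_map_limit[OF tv_cont_transl[OF tv mz] w[folded md(3)]] .
  moreover have "(\<lambda>v. sadd (smul (-1) z) v) \<circ> (\<lambda>n. sadd z (x n)) = x"
    by (simp add: fun_eq_iff szero_apply sadd_apply smul_apply ssub_apply)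
  ultimately have "limitin T x (sadd (smul (-1) z) w) sequentially" by simp
  moreover have "sadd (smul (-1) z) w \<in> S" using limitin_topspace[OF calculation] tv_top[OF tv] by simp
  ultimately show ?thesis by blast
qed

lemma open_mapping_nbhd:
  assumes tv1: "tvs S T1" and tv2: "tvs S T2"
    and cm1: "completely_metrizable_space T1" and cm2: "completely_metrizable_space T2"
    and fin: "\<And>U. openin T2 U \<Longrightarrow> openin T1 U"
    and U: "openin T1 U" "szero \<in> U"
  shows "\<exists>N. openin T2 N \<and> szero \<in> N \<and> N \<subseteq> U"
proof -
  obtain M d where md: "Metric_space M d" "Metric_space.mcomplete M d" "T1 = Metric_space.mtopology M d"
    using cm1 unfolding completely_metrizable_space_def by blast
  interpret Metric_space M d by (rule md(1))
  have MS: "M = S" using md(3) tv_top[OF tv1] by simp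
  have zM: "szero \<in> M" using MS tv_zero[OF tv1] by simp
  define nxt where "nxt n W = (SOME P. openin T1 P \<and> szero \<in> P \<and>
      (\<forall>a\<in>P. \<forall>b\<in>P. sadd a b \<in> W \<inter> mball szero (1 / Suc n)))" for n W
  have nxt: "openin T1 (nxt n W) \<and> szero \<in> nxt n W \<and>
      (\<forall>a\<in>nxt n W. \<forall>b\<in>nxt n W. sadd a b \<in> W \<inter> mball szero (1 / Suc n))"
    if W: "openin T1 W" "szero \<in> W" for n W
  proof -
    have "openin T1 (W \<inter> mball szero (1 / Suc n))" using W(1) md(3) by (simp add: openin_Int)
    moreover have "szero \<in> W \<inter> mball szero (1 / Suc n)" using W(2) zM by simp
    ultimately have "\<exists>P. openin T1 P \<and> szero \<in> P \<and>
      (\<forall>a\<in>P. \<forall>b\<in>P. sadd a b \<in> W \<inter> mball szero (1 / Suc n))"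
      by (rule tv_nbhd_add[OF tv1])
    then show ?thesis unfolding nxt_def by (rule someI_ex)
  qed
  define V where "V n = rec_nat (nxt 0 U) (\<lambda>k W. nxt (Suc k) W) n" for n
  have V0: "V 0 = nxt 0 U" by (simp add: V_def)
  have VS: "V (Suc n) = nxt (Suc n) (V n)" for n by (simp add: V_def)
  have Vo: "openin T1 (V n) \<and> szero \<in> V n" for n
  proof (induction n)
    case 0 then show ?case using nxt[OF U, of 0] unfolding V0 by blast
  next
    case (Suc n) then show ?case using nxt[of "V n" "Suc n"] unfolding VS by blast
  qed
  have sz: "sadd a szero = a" for a by (simp add: fun_eq_iff szero_apply sadd_apply smul_apply ssub_apply)
  have VU: "\<forall>a\<in>V 0. \<forall>b\<in>V 0. sadd a b \<in> U" using nxt[OF U, of 0] unfolding V0 by blast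
  have Vstep: "\<forall>a\<in>V (Suc n). \<forall>b\<in>V (Suc n). sadd a b \<in> V n" for n
    using nxt[of "V n" "Suc n"] Vo[of n] unfolding VS by blast
  have Vball: "V n \<subseteq> mball szero (1 / Suc n)" for n
  proof
    fix a assume a: "a \<in> V n"
    show "a \<in> mball szero (1 / Suc n)"
    proof (cases n)
      case 0 then show ?thesis using nxt[OF U, of 0] V0 a sz by (metis IntD2)
    next
      case (Suc k) then show ?thesis using nxt[of "V k" "Suc k"] Vo[of k] VS a sz by (metis IntD2)
    qed
  qed
  have VsubS: "V n \<subseteq> S" for n using tv_open_sub[OF tv1] Vo by blast
  have Vsmall: "\<exists>N0. \<forall>n\<ge>N0. V n \<subseteq> P" if P: "openin T1 P" "szero \<in> P" for P
  proof -
    obtain r where r: "r > 0" "mball szero r \<subseteq> P" using P md(3) openin_mtopology by blast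
    obtain N0 where N0: "N0 > 0" "inverse (of_nat N0) < r" using ex_inverse_of_nat_less[OF r(1)] by blast
    have "V n \<subseteq> P" if "n \<ge> N0" for n
    proof -
      have "1 / real (Suc n) \<le> inverse (of_nat N0)" using that N0(1)
        by (simp add: divide_inverse le_imp_inverse_le)
      then have "mball szero (1 / Suc n) \<subseteq> mball szero r" using N0(2) by (intro mball_subset_concentric) simp
      then show ?thesis using Vball[of n] r(2) by blast
    qed
    then show ?thesis by blast
  qed
  define N where "N = T2 interior_of (T2 closure_of (V 1))"
  have No: "openin T2 N" by (simp add: N_def)
  have N0: "szero \<in> N" unfolding N_def by (rule baire_step[OF tv1 tv2 cm2 fin]) (use Vo in auto)
  have "T2 closure_of (V 1) \<subseteq> U"
  proof
    fix y assume y: "y \<in> T2 closure_of (V 1)"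
    have yS: "y \<in> S" using y closure_of_subset_topspace[of T2 "V 1"] tv_top[OF tv2] by blast
    define xsel where "xsel n s = (SOME x. x \<in> V (Suc n) \<and> ssub (ssub y s) x \<in> T2 closure_of (V (Suc (Suc n))))" for n s
    define s where "s n = rec_nat szero (\<lambda>k t. sadd t (xsel k t)) n" for n
    have s0: "s 0 = szero" by (simp add: s_def)
    have sS: "s (Suc n) = sadd (s n) (xsel n (s n))" for n by (simp add: s_def)
    have ex_step: "xsel n t \<in> V (Suc n) \<and> ssub (ssub y t) (xsel n t) \<in> T2 closure_of (V (Suc (Suc n)))"
      if t: "t \<in> S" "ssub y t \<in> T2 closure_of (V (Suc n))" for n t
    proof -
      define D where "D = T2 interior_of (T2 closure_of (V (Suc (Suc n))))"
      have D0: "szero \<in> D" unfolding D_def by (rule baire_step[OF tv1 tv2 cm2 fin]) (use Vo in auto)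
      define r where "r = ssub y t"
      have rS: "r \<in> S" using tv_sub[OF tv1 yS t(1)] by (simp add: r_def)
      have cr: "continuous_map T2 T2 (\<lambda>v. ssub r v)"
        by (rule tv_cont_sub2[OF tv2]) (auto simp: tv_top[OF tv2] rS)
      define E where "E = {v \<in> S. ssub r v \<in> D}"
      have Eo: "openin T2 E" unfolding E_def by (rule tv_preimage_open[OF tv2 cr]) (simp add: D_def)
      have "ssub r r = szero" by (simp add: fun_eq_iff szero_apply sadd_apply smul_apply ssub_apply)
      then have rE: "r \<in> E" using rS D0 by (simp add: E_def)
      obtain v where v: "v \<in> V (Suc n)" "v \<in> E"
        using t(2)[folded r_def] Eo rE unfolding in_closure_of by blast
      have "ssub r v \<in> T2 closure_of (V (Suc (Suc n)))"
        using v(2) interior_of_subset[of T2 "T2 closure_of (V (Suc (Suc n)))"] unfolding E_def D_def by blast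
      then have "\<exists>x. x \<in> V (Suc n) \<and> ssub (ssub y t) x \<in> T2 closure_of (V (Suc (Suc n)))"
        using v(1) r_def by blast
      then show ?thesis unfolding xsel_def by (rule someI_ex)
    qed
    have inv: "s n \<in> S \<and> ssub y (s n) \<in> T2 closure_of (V (Suc n))" for n
    proof (induction n)
      case 0 
      have "ssub y szero = y" by (simp add: fun_eq_iff szero_apply sadd_apply smul_apply ssub_apply)
      then show ?case using s0 tv_zero[OF tv1] y by simp
    next
      case (Suc n)
      have x: "xsel n (s n) \<in> V (Suc n)" "ssub (ssub y (s n)) (xsel n (s n)) \<in> T2 closure_of (V (Suc (Suc n)))"
        using ex_step[of "s n" n] Suc by auto
      have "ssub y (s (Suc n)) = ssub (ssub y (s n)) (xsel n (s n))"
        by (simp add: sS fun_eq_iff szero_apply sadd_apply smul_apply ssub_apply)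
      moreover have "s (Suc n) \<in> S"
        using sS[of n] tv_add[OF tv1, of "s n" "xsel n (s n)"] Suc.IH x(1) VsubS[of "Suc n"] by auto
      ultimately show ?case using x(2) by simp
    qed
    define xs where "xs n = xsel n (s n)" for n
    have xsV: "xs n \<in> V (Suc n)" for n using ex_step[of "s n" n] inv[of n] by (simp add: xs_def)
    have sS': "s (Suc n) = sadd (s n) (xs n)" for n by (simp add: sS xs_def)
    have sInS: "s n \<in> S" for n using inv by blast
    have tail: "ssub (s (k + m)) (s k) \<in> V k" for m k
    proof (induction m arbitrary: k)
      case 0
      have "ssub (s k) (s k) = szero" by (simp add: fun_eq_iff szero_apply sadd_apply smul_apply ssub_apply)
      then show ?case using Vo by simp
    next
      case (Suc m)
      have "ssub (s (k + Suc m)) (s k) = sadd (xs k) (ssub (s (Suc k + m)) (s (Suc k)))"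
        by (simp add: sS' fun_eq_iff szero_apply sadd_apply smul_apply ssub_apply)
      then show ?case using Vstep[of k] xsV[of k] Suc.IH[of "Suc k"] by simp
    qed
    have tail': "ssub (s m) (s k) \<in> V k" if "k \<le> m" for m k
      using tail[of k "m - k"] that by simp
    have cauchy: "\<exists>N. \<forall>m\<ge>N. \<forall>n\<ge>N. ssub (s m) (s n) \<in> W" if W: "openin T1 W" "szero \<in> W" for W
    proof -
      obtain P where P: "openin T1 P" "szero \<in> P" "\<forall>a\<in>P. \<forall>b\<in>P. ssub a b \<in> W"
        using tv_nbhd_sub[OF tv1 W] by blast
      obtain N0 where N0: "\<forall>n\<ge>N0. V n \<subseteq> P" using Vsmall[OF P(1,2)] by blast
      have "ssub (s m) (s n) \<in> W" if "m \<ge> N0" "n \<ge> N0" for m n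
      proof -
        have "ssub (s m) (s n) = ssub (ssub (s m) (s N0)) (ssub (s n) (s N0))" by (simp add: fun_eq_iff szero_apply sadd_apply smul_apply ssub_apply)
        moreover have "ssub (s m) (s N0) \<in> P" "ssub (s n) (s N0) \<in> P"
          using tail'[OF that(1)] tail'[OF that(2)] N0 by blast+
        ultimately show ?thesis using P(3) by simp
      qed
      then show ?thesis by blast
    qed
    obtain \<sigma> where \<sigma>: "\<sigma> \<in> S" "limitin T1 s \<sigma> sequentially"
      using klee[OF tv1 cm1 sInS cauchy] by blast
    have ev: "eventually (\<lambda>n. s n \<in> A) sequentially" if "openin T1 A" "\<sigma> \<in> A" for A
      using \<sigma>(2) that unfolding limitin_def by blast
    have \<sigma>U: "\<sigma> \<in> U"
    proof -
      have c: "continuous_map T1 T1 (\<lambda>v. ssub \<sigma> v)"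
        by (rule tv_cont_sub2[OF tv1]) (auto simp: tv_top[OF tv1] \<sigma>(1))
      have oo: "openin T1 {v \<in> S. ssub \<sigma> v \<in> V 0}" by (rule tv_preimage_open[OF tv1 c]) (use Vo in auto)
      have "ssub \<sigma> \<sigma> = szero" by (simp add: fun_eq_iff szero_apply sadd_apply smul_apply ssub_apply)
      then have "\<sigma> \<in> {v \<in> S. ssub \<sigma> v \<in> V 0}" using \<sigma>(1) Vo[of 0] by simp
      from ev[OF oo this] have "eventually (\<lambda>n. s n \<in> {v \<in> S. ssub \<sigma> v \<in> V 0}) sequentially" .
      then obtain m where m: "ssub \<sigma> (s m) \<in> V 0" by (auto simp: eventually_sequentially)
      have "ssub (s m) szero \<in> V 0" using tail'[of 0 m] s0 by simp
      moreover have "ssub (s m) szero = s m" by (simp add: fun_eq_iff szero_apply sadd_apply smul_apply ssub_apply)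
      ultimately have "sadd (s m) (ssub \<sigma> (s m)) \<in> U" using VU m by simp
      moreover have "sadd (s m) (ssub \<sigma> (s m)) = \<sigma>" by (simp add: fun_eq_iff szero_apply sadd_apply smul_apply ssub_apply)
      ultimately show ?thesis by simp
    qed
    have "ssub y \<sigma> = szero"
    proof (rule tv_zero_unique[OF tv2])
      show "ssub y \<sigma> \<in> S" using tv_sub[OF tv1 yS \<sigma>(1)] .
      fix O2 assume O2: "openin T2 O2" "szero \<in> O2"
      obtain P1 where P1: "openin T2 P1" "szero \<in> P1" "\<forall>a\<in>P1. \<forall>b\<in>P1. sadd a b \<in> O2"
        using tv_nbhd_add[OF tv2 O2] by blast
      obtain P2 where P2: "openin T2 P2" "szero \<in> P2" "\<forall>a\<in>P2. \<forall>b\<in>P2. sadd a b \<in> P1"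
        using tv_nbhd_add[OF tv2 P1(1,2)] by blast
      have P21: "P2 \<subseteq> P1"
      proof
        fix a assume "a \<in> P2"
        then have "sadd a szero \<in> P1" using P2(2,3) by blast
        then show "a \<in> P1" using sz by simp
      qed
      obtain N0 where N0: "\<forall>n\<ge>N0. V n \<subseteq> P2" using Vsmall[OF fin[OF P2(1)] P2(2)] by blast
      have c: "continuous_map T2 T2 (\<lambda>v. ssub v \<sigma>)"
        by (rule tv_cont_sub2[OF tv2]) (auto simp: tv_top[OF tv2] \<sigma>(1))
      have oo: "openin T2 {v \<in> S. ssub v \<sigma> \<in> P2}" by (rule tv_preimage_open[OF tv2 c P2(1)])
      have "ssub \<sigma> \<sigma> = szero" by (simp add: fun_eq_iff szero_apply sadd_apply smul_apply ssub_apply)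
      then have "\<sigma> \<in> {v \<in> S. ssub v \<sigma> \<in> P2}" using \<sigma>(1) P2(2) by simp
      from ev[OF fin[OF oo] this] have "eventually (\<lambda>n. s n \<in> {v \<in> S. ssub v \<sigma> \<in> P2}) sequentially" .
      then obtain N1 where N1: "\<forall>n\<ge>N1. ssub (s n) \<sigma> \<in> P2" by (auto simp: eventually_sequentially)
      define n where "n = max N0 N1"
      have sn: "ssub (s n) \<sigma> \<in> P2" using N1 by (simp add: n_def)
      have Vn: "V (Suc n) \<subseteq> P2" using N0 by (simp add: n_def)
      define r where "r = ssub y (s n)"
      have rS: "r \<in> S" using tv_sub[OF tv1 yS sInS] by (simp add: r_def)
      have cr: "continuous_map T2 T2 (\<lambda>v. ssub r v)"
        by (rule tv_cont_sub2[OF tv2]) (auto simp: tv_top[OF tv2] rS)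
      define E where "E = {v \<in> S. ssub r v \<in> P2}"
      have Eo: "openin T2 E" unfolding E_def by (rule tv_preimage_open[OF tv2 cr P2(1)])
      have "ssub r r = szero" by (simp add: fun_eq_iff szero_apply sadd_apply smul_apply ssub_apply)
      then have rE: "r \<in> E" using rS P2(2) by (simp add: E_def)
      obtain v where v: "v \<in> V (Suc n)" "v \<in> E"
        using inv[of n, folded r_def] Eo rE unfolding in_closure_of by blast
      have "sadd v (ssub r v) \<in> P1" using v Vn P2(3) by (auto simp: E_def)
      then have "sadd (sadd v (ssub r v)) (ssub (s n) \<sigma>) \<in> O2" using P1(3) sn P21 by blast
      moreover have "sadd (sadd v (ssub r v)) (ssub (s n) \<sigma>) = ssub y \<sigma>"
        by (simp add: r_def fun_eq_iff szero_apply sadd_apply smul_apply ssub_apply)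
      ultimately show "ssub y \<sigma> \<in> O2" by simp
    qed
    then have "y = \<sigma>" by (simp add: fun_eq_iff szero_apply sadd_apply smul_apply ssub_apply)
    then show "y \<in> U" using \<sigma>U by simp
  qed
  then have "N \<subseteq> U" unfolding N_def using interior_of_subset[of T2 "T2 closure_of (V 1)"] by blast
  then show ?thesis using No N0 by blast
qed

lemma open_mapping:
  assumes tv1: "tvs S T1" and tv2: "tvs S T2"
    and cm1: "completely_metrizable_space T1" and cm2: "completely_metrizable_space T2"
    and fin: "\<And>U. openin T2 U \<Longrightarrow> openin T1 U"
    and U: "openin T1 U"
  shows "openin T2 U"
proof (subst openin_subopen, intro ballI)
  fix x assume xU: "x \<in> U"
  have xS: "x \<in> S" using xU tv_open_sub[OF tv1 U] by blast
  define U' where "U' = {w \<in> S. sadd x w \<in> U}"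
  have U'o: "openin T1 U'" unfolding U'_def by (rule tv_preimage_open[OF tv1 tv_cont_transl[OF tv1 xS] U])
  have "sadd x szero = x" by (simp add: fun_eq_iff szero_apply sadd_apply)
  then have U'0: "szero \<in> U'" using xU tv_zero[OF tv1] by (simp add: U'_def)
  obtain N where N: "openin T2 N" "szero \<in> N" "N \<subseteq> U'"
    using open_mapping_nbhd[OF tv1 tv2 cm1 cm2 fin U'o U'0] by blast
  define N' where "N' = {v \<in> S. ssub v x \<in> N}"
  have c: "continuous_map T2 T2 (\<lambda>v. ssub v x)"
    by (rule tv_cont_sub2[OF tv2]) (auto simp: tv_top[OF tv2] xS)
  have N'o: "openin T2 N'" unfolding N'_def by (rule tv_preimage_open[OF tv2 c N(1)])
  have "ssub x x = szero" by (simp add: fun_eq_iff szero_apply ssub_apply)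
  then have xN': "x \<in> N'" using xS N(2) by (simp add: N'_def)
  have "N' \<subseteq> U"
  proof
    fix v assume "v \<in> N'"
    then have "ssub v x \<in> U'" using N(3) by (auto simp: N'_def)
    then have "sadd x (ssub v x) \<in> U" by (simp add: U'_def)
    moreover have "sadd x (ssub v x) = v" by (simp add: fun_eq_iff sadd_apply ssub_apply)
    ultimately show "v \<in> U" by simp
  qed
  then show "\<exists>T. openin T2 T \<and> x \<in> T \<and> T \<subseteq> U" using N'o xN' by blast
qed

lemma tvs_cm_incl:
  assumes tvY: "tvs Y TY" and tvZ: "tvs Z TZ"
    and cmY: "completely_metrizable_space TY" and cmZ: "completely_metrizable_space TZ"
    and YZ: "Y \<subseteq> Z"
  shows "continuous_map TY TZ (\<lambda>x. x)"
proof -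
  define dg :: "cseq \<Rightarrow> cseq \<times> cseq" where "dg y = (y, y)" for y
  define T' where "T' = pullback_topology Y dg (prod_topology TY TZ)"
  have topT': "topspace T' = Y"
    using YZ tv_top[OF tvY] tv_top[OF tvZ] by (auto simp: T'_def topspace_pullback_topology dg_def)
  have iY: "continuous_map T' TY (\<lambda>x. x)"
  proof -
    have "continuous_map T' TY (fst \<circ> dg)" unfolding T'_def by (rule continuous_map_pullback) (rule continuous_map_fst)
    moreover have "fst \<circ> dg = (\<lambda>x. x)" by (simp add: fun_eq_iff dg_def)
    ultimately show ?thesis by simp
  qed
  have iZ: "continuous_map T' TZ (\<lambda>x. x)"
  proof -
    have "continuous_map T' TZ (snd \<circ> dg)" unfolding T'_def by (rule continuous_map_pullback) (rule continuous_map_snd)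
    moreover have "snd \<circ> dg = (\<lambda>x. x)" by (simp add: fun_eq_iff dg_def)
    ultimately show ?thesis by simp
  qed
  have intoT': "continuous_map X T' f" if fY: "continuous_map X TY f" and fZ: "continuous_map X TZ f"
    and fin: "f ` topspace X \<subseteq> Y" for X :: "'x topology" and f
  proof -
    have "continuous_map X (prod_topology TY TZ) (dg \<circ> f)"
      using fY fZ by (simp add: dg_def o_def continuous_map_pairedI)
    then show ?thesis unfolding T'_def
      by (rule continuous_map_pullback') (use fin in auto)
  qed
  have tvT': "tvs Y T'"
    unfolding tvs_def
  proof (intro conjI allI ballI)
    show "szero \<in> Y" using tv_zero[OF tvY] .
    show "sadd x y \<in> Y" if "x \<in> Y" "y \<in> Y" for x y using tv_add[OF tvY that] .
    show "smul c x \<in> Y" if "x \<in> Y" for x c using tv_smul[OF tvY that] .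
    show "topspace T' = Y" by (rule topT')
    have a1: "continuous_map (prod_topology T' T') TY (\<lambda>p. sadd (fst p) (snd p))"
      by (intro tv_cont2[OF tvY] continuous_map_compose[OF continuous_map_fst iY, unfolded o_def]
            continuous_map_compose[OF continuous_map_snd iY, unfolded o_def])
    have a2: "continuous_map (prod_topology T' T') TZ (\<lambda>p. sadd (fst p) (snd p))"
      by (intro tv_cont2[OF tvZ] continuous_map_compose[OF continuous_map_fst iZ, unfolded o_def]
            continuous_map_compose[OF continuous_map_snd iZ, unfolded o_def])
    have "continuous_map (prod_topology T' T') T' (\<lambda>p. sadd (fst p) (snd p))"
      by (rule intoT'[OF a1 a2]) (auto simp: topT' tv_add[OF tvY])
    then show "continuous_map (prod_topology T' T') T' (\<lambda>(x, y). sadd x y)"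
      by (simp add: case_prod_unfold)
    have m1: "continuous_map (prod_topology euclidean T') TY (\<lambda>p. smul (fst p) (snd p))"
      by (intro tv_cont_smul_fun[OF tvY] continuous_map_fst
            continuous_map_compose[OF continuous_map_snd iY, unfolded o_def])
    have m2: "continuous_map (prod_topology euclidean T') TZ (\<lambda>p. smul (fst p) (snd p))"
      by (intro tv_cont_smul_fun[OF tvZ] continuous_map_fst
            continuous_map_compose[OF continuous_map_snd iZ, unfolded o_def])
    have "continuous_map (prod_topology euclidean T') T' (\<lambda>p. smul (fst p) (snd p))"
      by (rule intoT'[OF m1 m2]) (auto simp: topT' tv_smul[OF tvY])
    then show "continuous_map (prod_topology euclidean T') T' (\<lambda>(c, x). smul c x)"
      by (simp add: case_prod_unfold)
    fix j
    show "continuous_map T' euclidean (\<lambda>x. x j)"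
      using continuous_map_compose[OF iY tv_coord[OF tvY, of j]] by (simp add: o_def)
  qed
  have cmT': "completely_metrizable_space T'"
  proof -
    define D where "D = {p \<in> topspace (prod_topology TY TZ). fst p = snd p}"
    have D_eq: "D = (\<Inter>j. {p \<in> topspace (prod_topology TY TZ). fst p j = snd p j})"
      by (auto simp: D_def fun_eq_iff)
    have "closedin (prod_topology TY TZ) {p \<in> topspace (prod_topology TY TZ). fst p j = snd p j}" for j
    proof (rule closedin_continuous_maps_eq)
      show "Hausdorff_space (euclidean :: complex topology)" by simp
      show "continuous_map (prod_topology TY TZ) euclidean (\<lambda>p. fst p j)"
        using continuous_map_compose[OF continuous_map_fst tv_coord[OF tvY, of j]] by (simp add: o_def)
      show "continuous_map (prod_topology TY TZ) euclidean (\<lambda>p. snd p j)"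
        using continuous_map_compose[OF continuous_map_snd tv_coord[OF tvZ, of j]] by (simp add: o_def)
    qed
    then have Dc: "closedin (prod_topology TY TZ) D" unfolding D_eq by (intro closedin_Inter) auto
    have cmP: "completely_metrizable_space (prod_topology TY TZ)"
      using cmY cmZ by (simp add: completely_metrizable_space_prod_topology)
    have cmD: "completely_metrizable_space (subtopology (prod_topology TY TZ) D)"
      by (rule completely_metrizable_space_closedin[OF cmP Dc])
    have "homeomorphic_maps T' (subtopology (prod_topology TY TZ) D) dg fst"
      unfolding homeomorphic_maps_def
    proof (intro conjI ballI)
      have "dg = (\<lambda>x. (x, x))" by (simp add: fun_eq_iff dg_def)
      then have "continuous_map T' (prod_topology TY TZ) dg"
        using continuous_map_pairedI[OF iY iZ] by simp
      then show "continuous_map T' (subtopology (prod_topology TY TZ) D) dg"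
        by (rule continuous_map_into_subtopology)
           (use topT' YZ tv_top[OF tvY] tv_top[OF tvZ] in \<open>auto simp: D_def dg_def\<close>)
      have "continuous_map (subtopology (prod_topology TY TZ) D) TY fst"
        by (rule continuous_map_from_subtopology) (rule continuous_map_fst)
      moreover have "continuous_map (subtopology (prod_topology TY TZ) D) TZ fst"
      proof -
        have "continuous_map (subtopology (prod_topology TY TZ) D) TZ snd"
          by (rule continuous_map_from_subtopology) (rule continuous_map_snd)
        then show ?thesis
          by (rule continuous_map_eq) (auto simp: D_def)
      qed
      ultimately show "continuous_map (subtopology (prod_topology TY TZ) D) T' fst"
        by (rule intoT') (auto simp: D_def tv_top[OF tvY])
      show "fst (dg x) = x" for x by (simp add: dg_def)
      show "dg (fst p) = p" if "p \<in> topspace (subtopology (prod_topology TY TZ) D)" for p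
        using that by (auto simp: D_def dg_def prod_eq_iff)
    qed
    then have "T' homeomorphic_space subtopology (prod_topology TY TZ) D"
      by (rule homeomorphic_maps_imp_homeomorphic_space)
    then show ?thesis using cmD homeomorphic_completely_metrizable_space by blast
  qed
  have finer: "openin T' U" if "openin TY U" for U
  proof -
    have "U \<subseteq> Y" using tv_open_sub[OF tvY that] .
    have "openin (prod_topology TY TZ) (U \<times> Z)"
      using that openin_topspace[of TZ] tv_top[OF tvZ] by (simp add: openin_prod_Times_iff)
    moreover have "U = dg -` (U \<times> Z) \<inter> Y" using \<open>U \<subseteq> Y\<close> YZ by (auto simp: dg_def)
    ultimately show ?thesis unfolding T'_def openin_pullback_topology by blast
  qed
  show ?thesis
    unfolding continuous_map_def
  proof (intro conjI allI impI)
    show "(\<lambda>x. x) \<in> topspace TY \<rightarrow> topspace TZ" using YZ tv_top[OF tvY] tv_top[OF tvZ] by auto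
    fix U assume "openin TZ U"
    then have "openin T' {x \<in> topspace T'. x \<in> U}" using openin_continuous_map_preimage[OF iZ] by blast
    then have "openin TY {x \<in> topspace T'. x \<in> U}"
      using open_mapping[OF tvT' tvY cmT' cmY] finer by blast
    then show "openin TY {x \<in> topspace TY. x \<in> U}" using topT' tv_top[OF tvY] by simp
  qed
qed

lemma tvs_closed_sub:
  assumes tvZ: "tvs Z TZ" and cmZ: "completely_metrizable_space TZ"
    and Y0: "szero \<in> Y" and Yadd: "\<And>x y. x \<in> Y \<Longrightarrow> y \<in> Y \<Longrightarrow> sadd x y \<in> Y"
    and Ysmul: "\<And>c x. x \<in> Y \<Longrightarrow> smul c x \<in> Y"
    and YZ: "Y \<subseteq> Z" and Yc: "closedin TZ Y"
  shows "tvs Y (subtopology TZ Y) \<and> completely_metrizable_space (subtopology TZ Y)"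
proof
  show "completely_metrizable_space (subtopology TZ Y)"
    by (rule completely_metrizable_space_closedin[OF cmZ Yc])
  have topY: "topspace (subtopology TZ Y) = Y" using YZ tv_top[OF tvZ] by auto
  have iZ: "continuous_map (subtopology TZ Y) TZ (\<lambda>x. x)"
    by (rule continuous_map_from_subtopology) (simp add: continuous_map_id[unfolded id_def])
  show "tvs Y (subtopology TZ Y)"
    unfolding tvs_def
  proof (intro conjI allI ballI)
    show "szero \<in> Y" by (rule Y0)
    show "sadd x y \<in> Y" if "x \<in> Y" "y \<in> Y" for x y using Yadd that .
    show "smul c x \<in> Y" if "x \<in> Y" for x c using Ysmul that .
    show "topspace (subtopology TZ Y) = Y" by (rule topY)
    have "continuous_map (prod_topology (subtopology TZ Y) (subtopology TZ Y)) TZ (\<lambda>p. sadd (fst p) (snd p))"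
      by (intro tv_cont2[OF tvZ] continuous_map_compose[OF continuous_map_fst iZ, unfolded o_def]
            continuous_map_compose[OF continuous_map_snd iZ, unfolded o_def])
    then have "continuous_map (prod_topology (subtopology TZ Y) (subtopology TZ Y)) (subtopology TZ Y) (\<lambda>p. sadd (fst p) (snd p))"
      by (rule continuous_map_into_subtopology) (auto simp: topY Yadd)
    then show "continuous_map (prod_topology (subtopology TZ Y) (subtopology TZ Y)) (subtopology TZ Y) (\<lambda>(x, y). sadd x y)"
      by (simp add: case_prod_unfold)
    have "continuous_map (prod_topology euclidean (subtopology TZ Y)) TZ (\<lambda>p. smul (fst p) (snd p))"
      by (intro tv_cont_smul_fun[OF tvZ] continuous_map_fst
            continuous_map_compose[OF continuous_map_snd iZ, unfolded o_def])
    then have "continuous_map (prod_topology euclidean (subtopology TZ Y)) (subtopology TZ Y) (\<lambda>p. smul (fst p) (snd p))"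
      by (rule continuous_map_into_subtopology) (auto simp: topY Ysmul)
    then show "continuous_map (prod_topology euclidean (subtopology TZ Y)) (subtopology TZ Y) (\<lambda>(c, x). smul c x)"
      by (simp add: case_prod_unfold)
    fix j
    show "continuous_map (subtopology TZ Y) euclidean (\<lambda>x. x j)"
      by (rule continuous_map_from_subtopology) (rule tv_coord[OF tvZ])
  qed
qed

lemma real_HB:
  fixes p u :: "cseq \<Rightarrow> real"
  assumes Z0: "szero \<in> Z" and Zadd: "\<And>x y. x \<in> Z \<Longrightarrow> y \<in> Z \<Longrightarrow> sadd x y \<in> Z"
    and Zsmul: "\<And>c x. x \<in> Z \<Longrightarrow> smul c x \<in> Z"
    and Y0: "szero \<in> Y" and Yadd: "\<And>x y. x \<in> Y \<Longrightarrow> y \<in> Y \<Longrightarrow> sadd x y \<in> Y"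
    and Ysmul: "\<And>c x. x \<in> Y \<Longrightarrow> smul c x \<in> Y"
    and YZ: "Y \<subseteq> Z"
    and psub: "\<And>x y. x \<in> Z \<Longrightarrow> y \<in> Z \<Longrightarrow> p (sadd x y) \<le> p x + p y"
    and phom: "\<And>x r. x \<in> Z \<Longrightarrow> r > 0 \<Longrightarrow> p (smul (of_real r) x) = r * p x"
    and uadd: "\<And>x y. x \<in> Y \<Longrightarrow> y \<in> Y \<Longrightarrow> u (sadd x y) = u x + u y"
    and usmul: "\<And>x r. x \<in> Y \<Longrightarrow> u (smul (of_real r) x) = r * u x"
    and udom: "\<And>y. y \<in> Y \<Longrightarrow> u y \<le> p y"
  shows "\<exists>U. (\<forall>x\<in>Z. \<forall>y\<in>Z. U (sadd x y) = U x + U y) \<and> (\<forall>x\<in>Z. \<forall>r. U (smul (of_real r) x) = r * U x)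
           \<and> (\<forall>y\<in>Y. U y = u y) \<and> (\<forall>x\<in>Z. U x \<le> p x)"
proof -
  define A where "A = {G :: (cseq \<times> real) set.
     (\<forall>a r s. (a, r) \<in> G \<longrightarrow> (a, s) \<in> G \<longrightarrow> r = s) \<and>
     (\<forall>a r. (a, r) \<in> G \<longrightarrow> a \<in> Z \<and> r \<le> p a) \<and>
     (\<forall>y\<in>Y. (y, u y) \<in> G) \<and>
     (\<forall>a r b s. (a, r) \<in> G \<longrightarrow> (b, s) \<in> G \<longrightarrow> (sadd a b, r + s) \<in> G) \<and>
     (\<forall>a r c. (a, r) \<in> G \<longrightarrow> (smul (of_real c) a, c * r) \<in> G)}"
  define G0 where "G0 = {(y, u y) | y. y \<in> Y}"
  have G0A: "G0 \<in> A" unfolding A_def G0_def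
    using YZ udom uadd usmul Yadd Ysmul by auto
  have "\<exists>M\<in>A. \<forall>X\<in>A. M \<subseteq> X \<longrightarrow> X = M"
  proof (rule Zorn_Lemma2, intro ballI)
    fix C assume C: "C \<in> chains A"
    show "\<exists>U\<in>A. \<forall>X\<in>C. X \<subseteq> U"
    proof (cases "C = {}")
      case True then show ?thesis using G0A by blast
    next
      case False
      have CA: "C \<subseteq> A" and ch: "\<And>X X'. X \<in> C \<Longrightarrow> X' \<in> C \<Longrightarrow> X \<subseteq> X' \<or> X' \<subseteq> X"
        using C unfolding chains_def chain_subset_def by blast+
      have one: "\<exists>X\<in>C. P \<in> X \<and> Q \<in> X" if PQ: "P \<in> \<Union>C" "Q \<in> \<Union>C" for P Q
      proof -
        obtain X1 X2 where "X1 \<in> C" "X2 \<in> C" "P \<in> X1" "Q \<in> X2" using PQ by blast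
        then show ?thesis using ch[of X1 X2] by blast
      qed
      have "\<Union>C \<in> A" unfolding A_def
      proof (intro CollectI conjI allI impI ballI)
        fix a r s assume "(a, r) \<in> \<Union>C" "(a, s) \<in> \<Union>C"
        then obtain X where "X \<in> C" "(a, r) \<in> X" "(a, s) \<in> X" using one by blast
        then show "r = s" using CA unfolding A_def by blast
      next
        fix a r assume "(a, r) \<in> \<Union>C"
        then obtain X where "X \<in> C" "(a, r) \<in> X" by blast
        then show "a \<in> Z" "r \<le> p a" using CA unfolding A_def by blast+
      next
        fix y assume "y \<in> Y"
        obtain X where "X \<in> C" using False by blast
        then show "(y, u y) \<in> \<Union>C" using CA \<open>y \<in> Y\<close> unfolding A_def by blast
      next
        fix a r b s assume "(a, r) \<in> \<Union>C" "(b, s) \<in> \<Union>C"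
        then obtain X where "X \<in> C" "(a, r) \<in> X" "(b, s) \<in> X" using one by blast
        then show "(sadd a b, r + s) \<in> \<Union>C" using CA unfolding A_def by blast
      next
        fix a r c assume "(a, r) \<in> \<Union>C"
        then obtain X where "X \<in> C" "(a, r) \<in> X" by blast
        then show "(smul (of_real c) a, c * r) \<in> \<Union>C" using CA unfolding A_def by blast
      qed
      then show ?thesis by blast
    qed
  qed
  then obtain M where MA: "M \<in> A" and Mmax: "\<And>X. X \<in> A \<Longrightarrow> M \<subseteq> X \<Longrightarrow> X = M" by blast
  have Mfun: "\<And>a r s. (a, r) \<in> M \<Longrightarrow> (a, s) \<in> M \<Longrightarrow> r = s"
    and MZ: "\<And>a r. (a, r) \<in> M \<Longrightarrow> a \<in> Z" and Mp: "\<And>a r. (a, r) \<in> M \<Longrightarrow> r \<le> p a"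
    and MY: "\<And>y. y \<in> Y \<Longrightarrow> (y, u y) \<in> M"
    and Madd: "\<And>a r b s. (a, r) \<in> M \<Longrightarrow> (b, s) \<in> M \<Longrightarrow> (sadd a b, r + s) \<in> M"
    and Msmul: "\<And>a r c. (a, r) \<in> M \<Longrightarrow> (smul (of_real c) a, c * r) \<in> M"
    using MA unfolding A_def by blast+
  define D where "D = {a. \<exists>r. (a, r) \<in> M}"
  define h where "h a = (SOME r. (a, r) \<in> M)" for a
  have hM: "(a, h a) \<in> M" if aD: "a \<in> D" for a
  proof -
    obtain r where "(a, r) \<in> M" using aD unfolding D_def by blast
    then show ?thesis unfolding h_def by (rule someI)
  qed
  have hfun: "h a = r" if "(a, r) \<in> M" for a r
    using Mfun[OF hM that] that by (auto simp: D_def)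
  have Dadd: "sadd a b \<in> D" and hadd: "h (sadd a b) = h a + h b" if "a \<in> D" "b \<in> D" for a b
    using Madd[OF hM[OF that(1)] hM[OF that(2)]] hfun by (auto simp: D_def)
  have Dsmul: "smul (of_real c) a \<in> D" and hsmul: "h (smul (of_real c) a) = c * h a" if "a \<in> D" for a c
    using Msmul[OF hM[OF that]] hfun by (auto simp: D_def)
  have DZ: "a \<in> D \<Longrightarrow> a \<in> Z" for a using MZ hM by blast
  have hp: "a \<in> D \<Longrightarrow> h a \<le> p a" for a using Mp hM by blast
  have YD: "y \<in> D" and hY: "h y = u y" if "y \<in> Y" for y
    using MY[OF that] hfun by (auto simp: D_def)
  have allD: "D = Z"
  proof (rule ccontr)
    assume "D \<noteq> Z"
    then obtain w where wZ: "w \<in> Z" and wD: "w \<notin> D" using DZ by blast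
    have zD: "szero \<in> D" using YD Y0 by blast
    have h0: "h szero = 0"
    proof -
      have "smul (of_real 0) szero = szero" by (simp add: fun_eq_iff smul_apply szero_apply)
      then show ?thesis using hsmul[OF zD, of 0] by simp
    qed
    have bound: "h m1 - p (ssub m1 w) \<le> p (sadd m2 w) - h m2" if "m1 \<in> D" "m2 \<in> D" for m1 m2
    proof -
      have "h m1 + h m2 = h (sadd m1 m2)" using hadd that by simp
      also have "\<dots> \<le> p (sadd m1 m2)" using hp Dadd that by blast
      also have "sadd m1 m2 = sadd (ssub m1 w) (sadd m2 w)" by (simp add: fun_eq_iff sadd_apply ssub_apply)
      also have "p \<dots> \<le> p (ssub m1 w) + p (sadd m2 w)"
        using psub DZ that wZ Zadd Zsmul by (simp add: ssub_def)
      finally show ?thesis by simp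
    qed
    define L where "L = {h m - p (ssub m w) | m. m \<in> D}"
    define c where "c = Sup L"
    have Lne: "L \<noteq> {}" using zD by (auto simp: L_def)
    have Lbdd: "bdd_above L" unfolding bdd_above_def L_def using bound[OF _ zD] by blast
    have c1: "h m - p (ssub m w) \<le> c" if "m \<in> D" for m
      unfolding c_def by (rule cSup_upper[OF _ Lbdd]) (use that in \<open>auto simp: L_def\<close>)
    have c2: "c \<le> p (sadd m w) - h m" if "m \<in> D" for m
      unfolding c_def by (rule cSup_least[OF Lne]) (use bound that in \<open>auto simp: L_def\<close>)
    define G' where "G' = {(sadd m (smul (of_real t) w), h m + t * c) | m t. m \<in> D}"
    have inG': "(sadd m (smul (of_real t) w), h m + t * c) \<in> G'" if "m \<in> D" for m t
      unfolding G'_def using that by blast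
    have MG': "M \<subseteq> G'"
    proof
      fix P assume "P \<in> M"
      then obtain a r where P: "P = (a, r)" "(a, r) \<in> M" by (cases P) auto
      then have "a \<in> D" "h a = r" using hfun by (auto simp: D_def)
      moreover have "sadd a (smul (of_real 0) w) = a" by (simp add: fun_eq_iff sadd_apply smul_apply)
      ultimately show "P \<in> G'" unfolding G'_def using P by force
    qed
    have G'A: "G' \<in> A" unfolding A_def
    proof (intro CollectI conjI allI impI ballI)
      fix a r s assume ar: "(a, r) \<in> G'" and as: "(a, s) \<in> G'"
      obtain m1 t1 where 1: "a = sadd m1 (smul (of_real t1) w)" "r = h m1 + t1 * c" "m1 \<in> D"
        using ar unfolding G'_def by blast
      obtain m2 t2 where 2: "a = sadd m2 (smul (of_real t2) w)" "s = h m2 + t2 * c" "m2 \<in> D"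
        using as unfolding G'_def by blast
      have t: "t1 = t2"
      proof (rule ccontr)
        assume ne: "t1 \<noteq> t2"
        have "w = smul (of_real (1 / (t1 - t2))) (sadd m2 (smul (of_real (-1)) m1))"
        proof -
          have "\<And>j. m1 j + of_real t1 * w j = m2 j + of_real t2 * w j"
            using 1(1) 2(1) by (metis sadd_apply smul_apply)
          then show ?thesis using ne
            by (auto simp: fun_eq_iff sadd_apply smul_apply field_simps)
        qed
        moreover have "smul (of_real (1 / (t1 - t2))) (sadd m2 (smul (of_real (-1)) m1)) \<in> D"
          using Dsmul Dadd 1(3) 2(3) by blast
        ultimately show False using wD by simp
      qed
      have "m1 = m2"
      proof -
        have "\<And>j. m1 j + of_real t1 * w j = m2 j + of_real t2 * w j"
          using 1(1) 2(1) by (metis sadd_apply smul_apply)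
        then show ?thesis using t by (simp add: fun_eq_iff)
      qed
      then show "r = s" using 1 2 t by simp
    next
      fix a r assume "(a, r) \<in> G'"
      then obtain m t where mt: "a = sadd m (smul (of_real t) w)" "r = h m + t * c" "m \<in> D"
        unfolding G'_def by blast
      show "a \<in> Z" using mt DZ Zadd Zsmul wZ by simp
      show "r \<le> p a"
      proof (cases t "0::real" rule: linorder_cases)
        case equal
        have "sadd m (smul (of_real t) w) = m" using equal by (simp add: fun_eq_iff sadd_apply smul_apply)
        then show ?thesis using mt hp equal by simp
      next
        case greater
        define m' where "m' = smul (of_real (1 / t)) m"
        have m'D: "m' \<in> D" unfolding m'_def by (rule Dsmul[OF mt(3)])
        have hm': "h m' = h m / t" unfolding m'_def using hsmul[OF mt(3), of "1/t"] by simp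
        have "t * c \<le> t * (p (sadd m' w) - h m')" using c2[OF m'D] greater by simp
        also have "\<dots> = p (smul (of_real t) (sadd m' w)) - h m"
          using phom[of "sadd m' w" t] greater DZ[OF m'D] wZ Zadd hm' by (simp add: right_diff_distrib)
        also have "smul (of_real t) (sadd m' w) = a"
          using greater mt(1) by (simp add: fun_eq_iff sadd_apply smul_apply m'_def distrib_left)
        finally show ?thesis using mt(2) by simp
      next
        case less
        define s where "s = - t"
        have s0: "s > 0" using less by (simp add: s_def)
        define m' where "m' = smul (of_real (1 / s)) m"
        have m'D: "m' \<in> D" unfolding m'_def by (rule Dsmul[OF mt(3)])
        have hm': "h m' = h m / s" unfolding m'_def using hsmul[OF mt(3), of "1/s"] by simp
        have "s * (h m' - p (ssub m' w)) \<le> s * c" using c1[OF m'D] s0 by simp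
        then have "h m - s * p (ssub m' w) \<le> s * c" using hm' s0 by (simp add: right_diff_distrib)
        moreover have "s * p (ssub m' w) = p (smul (of_real s) (ssub m' w))"
          using phom[of "ssub m' w" s] s0 DZ[OF m'D] wZ Zadd Zsmul by (simp add: ssub_def)
        moreover have "smul (of_real s) (ssub m' w) = a"
          using s0 mt(1) by (simp add: fun_eq_iff sadd_apply smul_apply ssub_apply m'_def s_def right_diff_distrib)
        ultimately show ?thesis using mt(2) by (simp add: s_def)
      qed
    next
      fix y assume y: "y \<in> Y"
      have "sadd y (smul (of_real 0) w) = y" by (simp add: fun_eq_iff sadd_apply smul_apply)
      then have "(sadd y (smul (of_real 0) w), h y + 0 * c) = (y, u y)" using hY[OF y] by simp
      then show "(y, u y) \<in> G'" using inG'[where t=0, OF YD[OF y]] by simp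
    next
      fix a r b s assume "(a, r) \<in> G'" "(b, s) \<in> G'"
      then obtain m1 t1 m2 t2 where 1: "a = sadd m1 (smul (of_real t1) w)" "r = h m1 + t1 * c" "m1 \<in> D"
        and 2: "b = sadd m2 (smul (of_real t2) w)" "s = h m2 + t2 * c" "m2 \<in> D"
        unfolding G'_def by blast
      have "sadd a b = sadd (sadd m1 m2) (smul (of_real (t1 + t2)) w)"
        using 1 2 by (simp add: fun_eq_iff sadd_apply smul_apply distrib_right)
      moreover have "r + s = h (sadd m1 m2) + (t1 + t2) * c" using 1 2 hadd by (simp add: distrib_right)
      ultimately show "(sadd a b, r + s) \<in> G'" using inG'[where t="t1 + t2", OF Dadd[OF 1(3) 2(3)]] by simp
    next
      fix a r c' assume "(a, r) \<in> G'"
      then obtain m t where mt: "a = sadd m (smul (of_real t) w)" "r = h m + t * c" "m \<in> D"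
        unfolding G'_def by blast
      have "smul (of_real c') a = sadd (smul (of_real c') m) (smul (of_real (c' * t)) w)"
        using mt by (simp add: fun_eq_iff sadd_apply smul_apply distrib_left)
      moreover have "c' * r = h (smul (of_real c') m) + (c' * t) * c" using mt hsmul by (simp add: distrib_left)
      ultimately show "(smul (of_real c') a, c' * r) \<in> G'" using inG'[where t="c' * t", OF Dsmul[OF mt(3)]] by simp
    qed
    have "G' = M" using Mmax[OF G'A MG'] .
    moreover have "(w, c) \<in> G'"
    proof -
      have "sadd szero (smul (of_real 1) w) = w" by (simp add: fun_eq_iff sadd_apply smul_apply szero_apply)
      then have eq: "(w, c) = (sadd szero (smul (of_real 1) w), h szero + 1 * c)" using h0 by simp
      show ?thesis using inG'[where t=1, OF zD] eq by simp
    qed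
    ultimately have "w \<in> D" by (auto simp: D_def)
    then show False using wD by simp
  qed
  show ?thesis
  proof (intro exI[of _ h] conjI ballI allI)
    show "h (sadd x y) = h x + h y" if "x \<in> Z" "y \<in> Z" for x y using hadd that allD by simp
    show "h (smul (of_real r) x) = r * h x" if "x \<in> Z" for x r using hsmul that allD by simp
    show "h y = u y" if "y \<in> Y" for y using hY that by simp
    show "h x \<le> p x" if "x \<in> Z" for x using hp that allD by simp
  qed
qed

lemma cmap_ofreal_mult:
  assumes "continuous_map X euclideanreal F"
  shows "continuous_map X euclidean (\<lambda>x. complex_of_real (F x) * k)"
proof -
  have "continuous_on UNIV (\<lambda>r. complex_of_real r * k)" by (intro continuous_intros)
  then have "continuous_map euclidean euclidean (\<lambda>r. complex_of_real r * k)"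
    using continuous_map_iff_continuous[of UNIV] by simp
  from continuous_map_compose[OF assms this] show ?thesis by (simp add: o_def)
qed

lemma HB_ext:
  assumes tvZ: "tvs Z TZ" and lc: "locally_convex_at0 TZ"
    and Y0: "szero \<in> Y" and Yadd: "\<And>x y. x \<in> Y \<Longrightarrow> y \<in> Y \<Longrightarrow> sadd x y \<in> Y"
    and Ysmul: "\<And>c x. x \<in> Y \<Longrightarrow> smul c x \<in> Y"
    and YZ: "Y \<subseteq> Z"
    and fadd: "\<And>x y. x \<in> Y \<Longrightarrow> y \<in> Y \<Longrightarrow> f (sadd x y) = f x + f y"
    and fsmul: "\<And>c x. x \<in> Y \<Longrightarrow> f (smul c x) = c * f x"
    and fc: "continuous_map (subtopology TZ Y) euclidean f"
  shows "\<exists>g. (\<forall>x\<in>Z. \<forall>y\<in>Z. g (sadd x y) = g x + g y) \<and> (\<forall>c. \<forall>x\<in>Z. g (smul c x) = c * g x)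
             \<and> continuous_map TZ euclidean g \<and> (\<forall>y\<in>Y. g y = f y)"
proof -
  have Z0: "szero \<in> Z" and Zadd: "\<And>x y. x \<in> Z \<Longrightarrow> y \<in> Z \<Longrightarrow> sadd x y \<in> Z"
    and Zsmul: "\<And>c x. x \<in> Z \<Longrightarrow> smul c x \<in> Z"
    using tv_zero[OF tvZ] tv_add[OF tvZ] tv_smul[OF tvZ] by auto
  have f0: "f szero = 0"
  proof -
    have "smul 0 szero = szero" by (simp add: fun_eq_iff smul_apply szero_apply)
    then show ?thesis using fsmul[OF Y0, of 0] by simp
  qed
  have topY: "topspace (subtopology TZ Y) = Y" using YZ tv_top[OF tvZ] by auto
  have "openin (subtopology TZ Y) {x \<in> topspace (subtopology TZ Y). f x \<in> ball 0 1}"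
    by (rule openin_continuous_map_preimage[OF fc]) simp
  then obtain U0 where U0: "openin TZ U0" "{x \<in> Y. f x \<in> ball 0 1} = U0 \<inter> Y"
    unfolding openin_subtopology topY by blast
  have "szero \<in> {x \<in> Y. f x \<in> ball 0 1}" using Y0 f0 by simp
  then have "szero \<in> U0 \<inter> Y" by (simp only: U0(2))
  then have zU0: "szero \<in> U0" by simp
  obtain V where V: "openin TZ V" "szero \<in> V" "V \<subseteq> U0"
    and conv: "\<And>x y t. x \<in> V \<Longrightarrow> y \<in> V \<Longrightarrow> 0 \<le> t \<Longrightarrow> t \<le> 1 \<Longrightarrow>
       (\<lambda>j. of_real t * x j + of_real (1 - t) * y j) \<in> V"
    using lc U0(1) zU0 unfolding locally_convex_at0_def by meson
  have VZ: "V \<subseteq> Z" using tv_open_sub[OF tvZ V(1)] .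
  have Vf: "norm (f y) < 1" if yy: "y \<in> V" "y \<in> Y" for y
  proof -
    have "y \<in> U0 \<inter> Y" using yy V(3) by blast
    then have "y \<in> {x \<in> Y. f x \<in> ball 0 1}" by (simp only: U0(2))
    then show ?thesis by simp
  qed
  define K where "K z = {t::real. 0 < t \<and> smul (of_real (1 / t)) z \<in> V}" for z
  define p where "p z = Inf (K z)" for z
  have Kne: "K z \<noteq> {}" if z: "z \<in> Z" for z
  proof -
    obtain r where r: "r > 0" "\<forall>c. norm c < r \<longrightarrow> smul c z \<in> V"
      using tv_absorb[OF tvZ z V(1,2)] by blast
    have "norm (of_real (1 / (2 / r)) :: complex) < r" using r(1) by simp
    then have "2 / r \<in> K z" using r by (simp add: K_def)
    then show ?thesis by blast
  qed
  have Kbdd: "bdd_below (K z)" for z unfolding bdd_below_def K_def by (rule exI[of _ 0]) auto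
  have ple: "p z \<le> t" if "t \<in> K z" for z t unfolding p_def by (rule cInf_lower[OF that Kbdd])
  have pge: "a \<le> p z" if "z \<in> Z" "\<And>t. t \<in> K z \<Longrightarrow> a \<le> t" for z a
    unfolding p_def by (rule cInf_greatest[OF Kne[OF that(1)]]) (use that in auto)
  have psub: "p (sadd x y) \<le> p x + p y" if xy: "x \<in> Z" "y \<in> Z" for x y
  proof -
    have st: "p (sadd x y) \<le> s + t" if s: "s \<in> K x" and t: "t \<in> K y" for s t
    proof -
      have s0: "s > 0" and t0: "t > 0" using s t by (auto simp: K_def)
      define l where "l = s / (s + t)"
      have l01: "0 \<le> l" "l \<le> 1" using s0 t0 by (auto simp: l_def)
      have "(\<lambda>j. of_real l * smul (of_real (1 / s)) x j + of_real (1 - l) * smul (of_real (1 / t)) y j) \<in> V"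
        by (rule conv) (use s t l01 in \<open>auto simp: K_def\<close>)
      moreover have "(\<lambda>j. of_real l * smul (of_real (1 / s)) x j + of_real (1 - l) * smul (of_real (1 / t)) y j)
          = smul (of_real (1 / (s + t))) (sadd x y)"
      proof -
        have e1: "l * (1 / s) = 1 / (s + t)" using s0 t0 by (simp add: l_def)
        have e2: "(1 - l) * (1 / t) = 1 / (s + t)" using s0 t0 by (simp add: l_def field_simps)
        have e1': "complex_of_real l * complex_of_real (1 / s) = complex_of_real (1 / (s + t))"
          using arg_cong[OF e1, of complex_of_real] by simp
        have e2': "complex_of_real (1 - l) * complex_of_real (1 / t) = complex_of_real (1 / (s + t))"
          using arg_cong[OF e2, of complex_of_real] by simp
        show ?thesis
          by (simp only: fun_eq_iff smul_apply sadd_apply mult.assoc[symmetric] e1' e2' distrib_left) simp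
      qed
      ultimately have "s + t \<in> K (sadd x y)" using s0 t0 by (simp add: K_def)
      then show ?thesis by (rule ple)
    qed
    have "p (sadd x y) - p y \<le> p x"
    proof (rule pge[OF xy(1)])
      fix s assume s: "s \<in> K x"
      have "p (sadd x y) - s \<le> p y" by (rule pge[OF xy(2)]) (use st[OF s] in force)
      then show "p (sadd x y) - p y \<le> s" by simp
    qed
    then show ?thesis by simp
  qed
  have phom: "p (smul (of_real r) x) = r * p x" if x: "x \<in> Z" and r: "r > 0" for x r
  proof (rule antisym)
    have "p (smul (of_real r) x) / r \<le> p x"
    proof (rule pge[OF x])
      fix t assume t: "t \<in> K x"
      have "smul (of_real (1 / (r * t))) (smul (of_real r) x) = smul (of_real (1 / t)) x"
        using r by (simp add: fun_eq_iff smul_apply)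
      then have "r * t \<in> K (smul (of_real r) x)" using t r by (simp add: K_def)
      then have "p (smul (of_real r) x) \<le> r * t" by (rule ple)
      then show "p (smul (of_real r) x) / r \<le> t" using r by (simp add: field_simps)
    qed
    then show "p (smul (of_real r) x) \<le> r * p x" using r by (simp add: field_simps)
    have "p x \<le> p (smul (of_real r) x) / r"
    proof -
      have "r * p x \<le> p (smul (of_real r) x)"
      proof (rule pge)
        show "smul (of_real r) x \<in> Z" using Zsmul x by simp
        fix t assume t: "t \<in> K (smul (of_real r) x)"
        have t0: "t > 0" using t by (simp add: K_def)
        have "smul (of_real (1 / (t / r))) x = smul (of_real (1 / t)) (smul (of_real r) x)"
          using r by (simp add: fun_eq_iff smul_apply)
        then have "t / r \<in> K x" using t r t0 by (simp add: K_def)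
        then have "p x \<le> t / r" by (rule ple)
        then show "r * p x \<le> t" using r by (simp add: field_simps)
      qed
      then show ?thesis using r by (simp add: field_simps)
    qed
    then show "r * p x \<le> p (smul (of_real r) x)" using r by (simp add: field_simps)
  qed
  define u where "u y = Re (f y)" for y
  have uadd: "u (sadd x y) = u x + u y" if "x \<in> Y" "y \<in> Y" for x y using fadd[OF that] by (simp add: u_def)
  have usmul: "u (smul (of_real r) x) = r * u x" if "x \<in> Y" for x r using fsmul[OF that] by (simp add: u_def)
  have udom: "u y \<le> p y" if y: "y \<in> Y" for y
  proof (rule pge)
    show "y \<in> Z" using y YZ by blast
    fix t assume t: "t \<in> K y"
    then have t0: "t > 0" and tv: "smul (of_real (1 / t)) y \<in> V" by (auto simp: K_def)
    have "norm (f (smul (of_real (1 / t)) y)) < 1" using Vf[OF tv Ysmul[OF y]] .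
    then have "norm (f y) / t < 1" using fsmul[OF y] t0 by (simp add: norm_mult norm_divide)
    then have "norm (f y) < t" using t0 by (simp add: field_simps)
    then show "u y \<le> t" unfolding u_def using complex_Re_le_cmod[of "f y"] by linarith
  qed
  obtain U where Uadd: "\<And>x y. x \<in> Z \<Longrightarrow> y \<in> Z \<Longrightarrow> U (sadd x y) = U x + U y"
    and Usmul: "\<And>x r. x \<in> Z \<Longrightarrow> U (smul (of_real r) x) = r * U x"
    and UY: "\<And>y. y \<in> Y \<Longrightarrow> U y = u y" and Up: "\<And>x. x \<in> Z \<Longrightarrow> U x \<le> p x"
    using real_HB[of Z Y p u, OF Z0 Zadd Zsmul Y0 Yadd Ysmul YZ psub phom uadd usmul udom] by blast
  have Ubound: "\<bar>U v\<bar> \<le> e" if v: "v \<in> Z" and e: "e > 0"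
    and v1: "smul (of_real (1 / e)) v \<in> V" and v2: "smul (of_real (- 1 / e)) v \<in> V" for v e
  proof -
    have "U v \<le> e" using Up[OF v] ple[of e v] e v1 by (simp add: K_def)
    moreover have "- U v \<le> e"
    proof -
      have mv: "smul (of_real (-1)) v \<in> Z" using Zsmul v by blast
      have "smul (of_real (1 / e)) (smul (of_real (-1)) v) = smul (of_real (- 1 / e)) v"
        by (simp add: fun_eq_iff smul_apply)
      then have "e \<in> K (smul (of_real (-1)) v)" using e v2 by (simp add: K_def)
      then have "U (smul (of_real (-1)) v) \<le> e" using Up[OF mv] ple by fastforce
      then show ?thesis using Usmul[OF v, of "-1"] by simp
    qed
    ultimately show ?thesis by linarith
  qed
  have Ucont: "continuous_map TZ euclideanreal U"
    unfolding Met_TC.continuous_map_to_metric[unfolded mtopology_is_euclidean mball_eq_ball]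
  proof (intro ballI allI impI)
    fix x0 and \<epsilon> :: real assume x0: "x0 \<in> topspace TZ" and \<epsilon>: "\<epsilon> > 0"
    have x0Z: "x0 \<in> Z" using x0 tv_top[OF tvZ] by simp
    define e where "e = \<epsilon> / 2"
    have e0: "e > 0" using \<epsilon> by (simp add: e_def)
    have cs: "continuous_map TZ TZ (\<lambda>z. smul k (ssub z x0))" for k
      by (intro tv_cont_smul_fun[OF tvZ] tv_cont_sub2[OF tvZ]) (auto simp: tv_top[OF tvZ] x0Z)
    define N where "N = {z \<in> Z. smul (of_real (1 / e)) (ssub z x0) \<in> V} \<inter> {z \<in> Z. smul (of_real (- 1 / e)) (ssub z x0) \<in> V}"
    have No: "openin TZ N" unfolding N_def
      by (intro openin_Int tv_preimage_open[OF tvZ cs V(1)])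
    have "smul k (ssub x0 x0) = szero" for k by (simp add: fun_eq_iff smul_apply ssub_apply szero_apply)
    then have x0N: "x0 \<in> N" using x0Z V(2) by (simp add: N_def)
    have "\<forall>y\<in>N. U y \<in> ball (U x0) \<epsilon>"
    proof
      fix y assume y: "y \<in> N"
      then have yZ: "y \<in> Z" by (simp add: N_def)
      have sZ: "ssub y x0 \<in> Z" using tv_sub[OF tvZ yZ x0Z] .
      have "\<bar>U (ssub y x0)\<bar> \<le> e" using Ubound[OF sZ e0] y by (simp add: N_def)
      moreover have "U (ssub y x0) = U y - U x0"
      proof -
        have "U (ssub y x0) = U y + U (smul (of_real (-1)) x0)"
          unfolding ssub_def using Uadd[OF yZ Zsmul[OF x0Z]] by simp
        then show ?thesis using Usmul[OF x0Z, of "-1"] by simp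
      qed
      ultimately show "U y \<in> ball (U x0) \<epsilon>" using e0 by (simp add: dist_real_def e_def abs_minus_commute)
    qed
    then show "\<exists>N. openin TZ N \<and> x0 \<in> N \<and> (\<forall>y\<in>N. U y \<in> ball (U x0) \<epsilon>)" using No x0N by blast
  qed
  define g where "g z = complex_of_real (U z) * 1 + complex_of_real (U (smul \<i> z)) * (- \<i>)" for z
  have gcont: "continuous_map TZ euclidean g"
  proof -
    have c2: "continuous_map TZ euclideanreal (\<lambda>z. U (smul \<i> z))"
      using continuous_map_compose[OF tv_cont_scal[OF tvZ] Ucont] by (simp add: o_def)
    show ?thesis unfolding g_def
      by (intro continuous_map_add cmap_ofreal_mult Ucont c2)
  qed
  have Ui: "U (smul \<i> (smul c x)) = Re c * U (smul \<i> x) - Im c * U x"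
     and Uc: "U (smul c x) = Re c * U x + Im c * U (smul \<i> x)" if x: "x \<in> Z" for x c
  proof -
    have ix: "smul \<i> x \<in> Z" using Zsmul x by blast
    have "smul c x = sadd (smul (of_real (Re c)) x) (smul (of_real (Im c)) (smul \<i> x))"
      by (simp add: fun_eq_iff smul_apply sadd_apply complex_eq_iff)
    then show "U (smul c x) = Re c * U x + Im c * U (smul \<i> x)"
      using Uadd[OF Zsmul[OF x] Zsmul[OF ix]] Usmul[OF x] Usmul[OF ix] by simp
    have "smul \<i> (smul c x) = sadd (smul (of_real (Re c)) (smul \<i> x)) (smul (of_real (- Im c)) x)"
      by (simp add: fun_eq_iff smul_apply sadd_apply complex_eq_iff)
    then show "U (smul \<i> (smul c x)) = Re c * U (smul \<i> x) - Im c * U x"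
      using Uadd[OF Zsmul[OF ix] Zsmul[OF x]] Usmul[OF x, of "- Im c"] Usmul[OF ix] by simp
  qed
  show ?thesis
  proof (intro exI[of _ g] conjI ballI allI gcont)
    fix x y assume x: "x \<in> Z" and y: "y \<in> Z"
    have "smul \<i> (sadd x y) = sadd (smul \<i> x) (smul \<i> y)" by (simp add: fun_eq_iff smul_apply sadd_apply algebra_simps)
    then show "g (sadd x y) = g x + g y"
      using Uadd[OF x y] Uadd[OF Zsmul[OF x] Zsmul[OF y]] by (simp add: g_def algebra_simps)
  next
    fix c x assume x: "x \<in> Z"
    show "g (smul c x) = c * g x"
      using Ui[OF x, of c] Uc[OF x, of c] by (simp add: g_def complex_eq_iff algebra_simps)
  next
    fix y assume y: "y \<in> Y"
    have yZ: "y \<in> Z" using y YZ by blast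
    have "U y = Re (f y)" using UY[OF y] by (simp add: u_def)
    moreover have "U (smul \<i> y) = - Im (f y)" using UY[OF Ysmul[OF y]] fsmul[OF y] by (simp add: u_def)
    ultimately show "g y = f y" by (simp add: g_def complex_eq_iff)
  qed
qed

lemma Tdc_phi: "Tdc p q n x \<in> phi"
proof -
  have "{j. Tdc p q n x j \<noteq> 0} \<subseteq> {..<q n}"
  proof
    fix j assume "j \<in> {j. Tdc p q n x j \<noteq> 0}"
    then have ne: "Tdc p q n x j \<noteq> 0" by simp
    show "j \<in> {..<q n}"
    proof (rule ccontr)
      assume "j \<notin> {..<q n}"
      then have "\<forall>k\<in>{p n + 1..q n}. sect k x j = 0" by (auto simp: sect_def)
      then have "Tdc p q n x j = 0" by (simp add: Tdc_def)
      then show False using ne by simp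
    qed
  qed
  then have "finite {j. Tdc p q n x j \<noteq> 0}" using finite_subset by blast
  then show ?thesis by (simp add: phi_def)
qed

lemma FK_cm: "FK_space X T \<Longrightarrow> completely_metrizable_space T" by (simp add: FK_space_def)
lemma FK_lc: "FK_space X T \<Longrightarrow> locally_convex_at0 T" by (simp add: FK_space_def)

theorem mainTheorem3:
  fixes p q :: "nat \<Rightarrow> nat" and X Y Z :: "cseq set" and TX TY TZ :: "cseq topology"
  assumes pq: "\<And>n. p n < q n" and qinf: "filterlim q at_top sequentially"
    and FX: "FK_space X TX" and FY: "FK_space Y TY" and FZ: "FK_space Z TZ"
    and phiX: "phi \<subseteq> X" and XY: "X \<subseteq> Y" and YZ: "Y \<subseteq> Z"
  shows "(dc_conull p q X TX Y TY \<longrightarrow> dc_conull p q X TX Z TZ) \<and>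
         (dc_conull p q X TX Z TZ \<and> closedin TZ Y \<longrightarrow> dc_conull p q X TX Y TY)"
proof (intro conjI impI)
  have tvY: "tvs Y TY" and tvZ: "tvs Z TZ" using FK_tvs FY FZ by blast+
  have cmY: "completely_metrizable_space TY" and cmZ: "completely_metrizable_space TZ"
    using FK_cm FY FZ by blast+
  have incl: "continuous_map TY TZ (\<lambda>x. x)" by (rule tvs_cm_incl[OF tvY tvZ cmY cmZ YZ])
  have Tin: "Tdc p q n x \<in> Y" for n x using Tdc_phi phiX XY by blast
  {
    assume A: "dc_conull p q X TX Y TY"
    show "dc_conull p q X TX Z TZ"
      unfolding dc_conull_def
    proof (intro conjI)
      show "X \<subseteq> Z" using XY YZ by blast
      show "DW p q X TX \<noteq> DB p q X TX" using A by (simp add: dc_conull_def)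
      show "DB p q X TX \<subseteq> DW p q Z TZ"
      proof
        fix x assume x: "x \<in> DB p q X TX"
        then have xW: "x \<in> DW p q Y TY" using A by (auto simp: dc_conull_def)
        have xX: "x \<in> X" using x by (simp add: DB_def)
        have "(\<lambda>n. g (Tdc p q n x)) \<longlonglongrightarrow> g x" if g: "g \<in> FK_dual Z TZ" for g
        proof -
          have "g \<in> FK_dual Y TY"
            unfolding FK_dual_def
          proof (intro CollectI conjI ballI allI)
            show "g (sadd a b) = g a + g b" if ab: "a \<in> Y" "b \<in> Y" for a b
            proof -
              have "a \<in> Z" "b \<in> Z" using ab YZ by auto
              then show ?thesis using g by (simp add: FK_dual_def)
            qed
            show "g (smul c a) = c * g a" if ab: "a \<in> Y" for a c
            proof -
              have "a \<in> Z" using ab YZ by auto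
              then show ?thesis using g by (simp add: FK_dual_def)
            qed
            have "continuous_map TZ euclidean g" using g by (simp add: FK_dual_def)
            from continuous_map_compose[OF incl this] show "continuous_map TY euclidean g"
              by (simp add: o_def)
          qed
          then show ?thesis using xW by (simp add: DW_def)
        qed
        then show "x \<in> DW p q Z TZ" using xX XY YZ by (auto simp: DW_def)
      qed
    qed
  }
  {
    assume A: "dc_conull p q X TX Z TZ \<and> closedin TZ Y"
    have Yc: "closedin TZ Y" using A by simp
    have Y0: "szero \<in> Y" and Yadd: "\<And>x y. x \<in> Y \<Longrightarrow> y \<in> Y \<Longrightarrow> sadd x y \<in> Y"
      and Ysmul: "\<And>c x. x \<in> Y \<Longrightarrow> smul c x \<in> Y"
      using tv_zero[OF tvY] tv_add[OF tvY] tv_smul[OF tvY] by auto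
    have sub: "tvs Y (subtopology TZ Y) \<and> completely_metrizable_space (subtopology TZ Y)"
      by (rule tvs_closed_sub[OF tvZ cmZ Y0 Yadd Ysmul YZ Yc])
    have topsub: "topspace (subtopology TZ Y) = Y" using YZ tv_top[OF tvZ] by auto
    have fin: "openin TY U" if oU: "openin (subtopology TZ Y) U" for U
    proof -
      obtain W where W: "openin TZ W" "U = W \<inter> Y" using oU unfolding openin_subtopology by blast
      have "openin TY {x \<in> topspace TY. x \<in> W}" using openin_continuous_map_preimage[OF incl W(1)] .
      moreover have "{x \<in> topspace TY. x \<in> W} = U" using W(2) tv_top[OF tvY] by auto
      ultimately show ?thesis by simp
    qed
    have bck: "openin (subtopology TZ Y) U" if "openin TY U" for U
      using open_mapping[OF tvY conjunct1[OF sub] cmY conjunct2[OF sub] fin that] .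
    show "dc_conull p q X TX Y TY"
      unfolding dc_conull_def
    proof (intro conjI)
      show "X \<subseteq> Y" by (rule XY)
      show "DW p q X TX \<noteq> DB p q X TX" using A by (simp add: dc_conull_def)
      show "DB p q X TX \<subseteq> DW p q Y TY"
      proof
        fix x assume x: "x \<in> DB p q X TX"
        then have xW: "x \<in> DW p q Z TZ" using A by (auto simp: dc_conull_def)
        have xX: "x \<in> X" using x by (simp add: DB_def)
        have xY: "x \<in> Y" using xX XY by blast
        have "(\<lambda>n. f (Tdc p q n x)) \<longlonglongrightarrow> f x" if f: "f \<in> FK_dual Y TY" for f
        proof -
          have fadd: "\<And>a b. a \<in> Y \<Longrightarrow> b \<in> Y \<Longrightarrow> f (sadd a b) = f a + f b"
            and fsmul: "\<And>c a. a \<in> Y \<Longrightarrow> f (smul c a) = c * f a"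
            and fc: "continuous_map TY euclidean f" using f by (auto simp: FK_dual_def)
          have fc': "continuous_map (subtopology TZ Y) euclidean f"
            unfolding continuous_map_def
          proof (intro conjI allI impI)
            show "f \<in> topspace (subtopology TZ Y) \<rightarrow> topspace euclidean" by simp
            fix O' :: "complex set" assume "openin euclidean O'"
            then have "openin TY {x \<in> topspace TY. f x \<in> O'}"
              using openin_continuous_map_preimage[OF fc] by blast
            then have "openin (subtopology TZ Y) {x \<in> topspace TY. f x \<in> O'}" by (rule bck)
            then show "openin (subtopology TZ Y) {x \<in> topspace (subtopology TZ Y). f x \<in> O'}"
              using topsub tv_top[OF tvY] by simp
          qed
          obtain g where gadd: "\<forall>a\<in>Z. \<forall>b\<in>Z. g (sadd a b) = g a + g b"
            and gsmul: "\<forall>c. \<forall>a\<in>Z. g (smul c a) = c * g a"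
            and gc: "continuous_map TZ euclidean g" and gY: "\<forall>y\<in>Y. g y = f y"
            using HB_ext[OF tvZ FK_lc[OF FZ] Y0 Yadd Ysmul YZ fadd fsmul fc'] by blast
          have "g \<in> FK_dual Z TZ" using gadd gsmul gc by (simp add: FK_dual_def)
          then have "(\<lambda>n. g (Tdc p q n x)) \<longlonglongrightarrow> g x" using xW by (simp add: DW_def)
          moreover have "(\<lambda>n. g (Tdc p q n x)) = (\<lambda>n. f (Tdc p q n x))" using gY Tin by simp
          moreover have "g x = f x" using gY xY by simp
          ultimately show ?thesis by simp
        qed
        then show "x \<in> DW p q Y TY" using xY by (simp add: DW_def)
      qed
    qed
  }
qed


end
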